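(* Every local derivation of the super Virasoro algebra $\mathrm{SVir}[0]$ is a derivation.
   Context: The super Virasoro algebra $\mathrm{SVir}[0]$ is the Lie superalgebra over $\mathbb{C}$ with basis $\{L_m, G_r, C : m\in\mathbb{Z}, r\in\mathbb{Z}\}$, even part spanned by the $L_m$ and $C$, odd part spanned by the $G_r$, and brackets $[L_m,L_n]=(m-n)L_{m+n}+\frac{1}{12}\delta_{m+n,0}(m^3-m)C$, $[L_m,G_r]=(\frac m2-r)G_{m+r}$, $[G_r,G_s]=2L_{r+s}+\frac13\delta_{r+s,0}(r^2-\frac14)C$, with $C$ central. A homogeneous linear map $D$ of parity $|D|\in\mathbb{Z}_2$ on a Lie superalgebra $L$ is a derivation if $D([x,y])=[D(x),y]+(-1)^{|D||x|}[x,D(y)]$ for all homogeneous $x,y$; $\mathrm{Der}(L)$ is the space of derivations (sums of even and odd derivations). A linear map $\Delta:L\to L$ is a local derivation if for every $x\in L$ there is a derivation $D_x\in\mathrm{Der}(L)$ with $\Delta(x)=D_x(x)$. *)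

theory Defs
  imports Complex_Main
begin

text \<open>The super Virasoro algebra SVir[0] over the complex numbers, realised as the
  space of finitely supported coefficient functions on the basis
  L_m (m in Z), G_r (r in Z), C.\<close>

datatype sv_idx = Lb int | Gb int | Cb

fun sv_par :: "sv_idx \<Rightarrow> bool" where
  "sv_par (Gb r) = True"
| "sv_par (Lb m) = False"
| "sv_par Cb = False"

fun sv_bb :: "sv_idx \<Rightarrow> sv_idx \<Rightarrow> sv_idx \<Rightarrow> complex" where
  "sv_bb (Lb m) (Lb n) k =
     (if k = Lb (m + n) then of_int (m - n)
      else if k = Cb \<and> m + n = 0 then (of_int m ^ 3 - of_int m) / 12 else 0)"
| "sv_bb (Lb m) (Gb r) k =
     (if k = Gb (m + r) then of_int m / 2 - of_int r else 0)"
| "sv_bb (Gb r) (Lb m) k =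
     (if k = Gb (m + r) then - (of_int m / 2 - of_int r) else 0)"
| "sv_bb (Gb r) (Gb s) k =
     (if k = Lb (r + s) then 2
      else if k = Cb \<and> r + s = 0 then (of_int r ^ 2 - 1 / 4) / 3 else 0)"
| "sv_bb Cb j k = 0"
| "sv_bb i Cb k = 0"

definition sv_carrier :: "(sv_idx \<Rightarrow> complex) set" where
  "sv_carrier = {f. finite {i. f i \<noteq> 0}}"

definition sv_br :: "(sv_idx \<Rightarrow> complex) \<Rightarrow> (sv_idx \<Rightarrow> complex) \<Rightarrow> sv_idx \<Rightarrow> complex" where
  "sv_br f g = (\<lambda>k. \<Sum>i\<in>{i. f i \<noteq> 0}. \<Sum>j\<in>{j. g j \<noteq> 0}. f i * g j * sv_bb i j k)"

definition sv_hom :: "bool \<Rightarrow> (sv_idx \<Rightarrow> complex) \<Rightarrow> bool" where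
  "sv_hom p f \<longleftrightarrow> f \<in> sv_carrier \<and> (\<forall>i. f i \<noteq> 0 \<longrightarrow> sv_par i = p)"

definition sv_linear :: "((sv_idx \<Rightarrow> complex) \<Rightarrow> (sv_idx \<Rightarrow> complex)) \<Rightarrow> bool" where
  "sv_linear D \<longleftrightarrow>
     (\<forall>x\<in>sv_carrier. D x \<in> sv_carrier) \<and>
     (\<forall>x\<in>sv_carrier. \<forall>y\<in>sv_carrier. D (\<lambda>k. x k + y k) = (\<lambda>k. D x k + D y k)) \<and>
     (\<forall>c. \<forall>x\<in>sv_carrier. D (\<lambda>k. c * x k) = (\<lambda>k. c * D x k))"

definition sv_derivation :: "bool \<Rightarrow> ((sv_idx \<Rightarrow> complex) \<Rightarrow> (sv_idx \<Rightarrow> complex)) \<Rightarrow> bool" where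
  "sv_derivation p D \<longleftrightarrow>
     sv_linear D \<and>
     (\<forall>q x. sv_hom q x \<longrightarrow> sv_hom (p \<noteq> q) (D x)) \<and>
     (\<forall>q r x y. sv_hom q x \<longrightarrow> sv_hom r y \<longrightarrow>
        D (sv_br x y) = (\<lambda>k. sv_br (D x) y k + (if p \<and> q then -1 else 1) * sv_br x (D y) k))"

definition sv_Der :: "((sv_idx \<Rightarrow> complex) \<Rightarrow> (sv_idx \<Rightarrow> complex)) \<Rightarrow> bool" where
  "sv_Der D \<longleftrightarrow> (\<exists>D0 D1. sv_derivation False D0 \<and> sv_derivation True D1 \<and>
      (\<forall>x\<in>sv_carrier. D x = (\<lambda>k. D0 x k + D1 x k)))"

definition sv_local_derivation :: "((sv_idx \<Rightarrow> complex) \<Rightarrow> (sv_idx \<Rightarrow> complex)) \<Rightarrow> bool" where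
  "sv_local_derivation \<Delta> \<longleftrightarrow> sv_linear \<Delta> \<and>
      (\<forall>x\<in>sv_carrier. \<exists>D. sv_Der D \<and> \<Delta> x = D x)"

end

theory Submission
  imports Defs
begin


fun wt :: "sv_idx \<Rightarrow> int" where
  "wt (Lb m) = m" | "wt (Gb r) = r" | "wt Cb = 0"

definition eb :: "sv_idx \<Rightarrow> sv_idx \<Rightarrow> complex" where
  "eb j = (\<lambda>k. if k = j then 1 else 0)"

definition supp :: "(sv_idx \<Rightarrow> complex) \<Rightarrow> sv_idx set" where
  "supp f = {i. f i \<noteq> 0}"

lemma carrier_iff: "f \<in> sv_carrier \<longleftrightarrow> finite (supp f)"
  by (simp add: sv_carrier_def supp_def)

lemma bb_wt: "sv_bb i j k \<noteq> 0 \<Longrightarrow> wt k = wt i + wt j"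
  by (cases i; cases j; cases k) (auto split: if_splits)

lemma bb_par: "sv_bb i j k \<noteq> 0 \<Longrightarrow> sv_par k = (sv_par i \<noteq> sv_par j)"
  by (cases i; cases j; cases k) (auto split: if_splits)

lemma bb_C1[simp]: "sv_bb Cb j k = 0" by simp
lemma bb_C2[simp]: "sv_bb i Cb k = 0" by (cases i) auto

lemma bb_supp: "{k. sv_bb i j k \<noteq> 0} \<subseteq> {Lb (wt i + wt j), Gb (wt i + wt j), Cb}"
proof
  fix k assume "k \<in> {k. sv_bb i j k \<noteq> 0}"
  then have "wt k = wt i + wt j" using bb_wt by auto
  then show "k \<in> {Lb (wt i + wt j), Gb (wt i + wt j), Cb}" by (cases k) auto
qed

lemma bb_fin: "finite {k. sv_bb i j k \<noteq> 0}"
  using bb_supp finite_subset by blast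

lemma eb_carrier[simp]: "eb j \<in> sv_carrier"
  by (simp add: sv_carrier_def eb_def)

lemma supp_eb: "supp (eb j) = {j}"
  by (auto simp: supp_def eb_def)

lemma sv_br_sets:
  assumes "finite S" "finite T" "supp f \<subseteq> S" "supp g \<subseteq> T"
  shows "sv_br f g k = (\<Sum>i\<in>S. \<Sum>j\<in>T. f i * g j * sv_bb i j k)"
proof -
  have "sv_br f g k = (\<Sum>i\<in>supp f. \<Sum>j\<in>supp g. f i * g j * sv_bb i j k)"
    by (simp add: sv_br_def supp_def)
  also have "\<dots> = (\<Sum>i\<in>supp f. \<Sum>j\<in>T. f i * g j * sv_bb i j k)"
    by (rule sum.cong[OF refl], rule sum.mono_neutral_left) (use assms in \<open>auto simp: supp_def\<close>)
  also have "\<dots> = (\<Sum>i\<in>S. \<Sum>j\<in>T. f i * g j * sv_bb i j k)"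
    by (rule sum.mono_neutral_left) (use assms in \<open>auto simp: supp_def\<close>)
  finally show ?thesis .
qed

lemma sv_br_inf1: "\<not> finite (supp f) \<Longrightarrow> sv_br f g = (\<lambda>k. 0)"
  by (simp add: sv_br_def supp_def)
lemma sv_br_inf2: "\<not> finite (supp g) \<Longrightarrow> sv_br f g = (\<lambda>k. 0)"
  by (simp add: sv_br_def supp_def)

lemma sv_br_carrier: "sv_br f g \<in> sv_carrier"
proof (cases "finite (supp f) \<and> finite (supp g)")
  case True
  let ?K = "\<Union>i\<in>supp f. \<Union>j\<in>supp g. {k. sv_bb i j k \<noteq> 0}"
  have fin: "finite ?K" using True bb_fin by auto
  have "supp (sv_br f g) \<subseteq> ?K"
  proof
    fix k assume k: "k \<in> supp (sv_br f g)"
    show "k \<in> ?K"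
    proof (rule ccontr)
      assume "k \<notin> ?K"
      then have "sv_br f g k = 0" unfolding sv_br_def
        by (intro sum.neutral ballI) (auto simp: supp_def)
      with k show False by (simp add: supp_def)
    qed
  qed
  then show ?thesis using fin finite_subset carrier_iff by blast
next
  case False
  then show ?thesis by (auto simp: sv_br_inf1 sv_br_inf2 sv_carrier_def)
qed

lemma sv_br_eb: "sv_br (eb i) (eb j) = sv_bb i j"
proof
  fix k show "sv_br (eb i) (eb j) k = sv_bb i j k"
    by (subst sv_br_sets[of "{i}" "{j}"]) (simp_all add: supp_eb, simp add: eb_def)
qed

lemma carrier_add: "f \<in> sv_carrier \<Longrightarrow> g \<in> sv_carrier \<Longrightarrow> (\<lambda>k. f k + g k) \<in> sv_carrier"
proof -
  assume a: "f \<in> sv_carrier" "g \<in> sv_carrier"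
  have "supp (\<lambda>k. f k + g k) \<subseteq> supp f \<union> supp g" by (auto simp: supp_def)
  then show ?thesis using a by (metis carrier_iff finite_Un finite_subset)
qed

lemma carrier_scale: "f \<in> sv_carrier \<Longrightarrow> (\<lambda>k. c * f k) \<in> sv_carrier"
proof -
  assume a: "f \<in> sv_carrier"
  have "supp (\<lambda>k. c * f k) \<subseteq> supp f" by (auto simp: supp_def)
  then show ?thesis using a by (metis carrier_iff finite_subset)
qed

lemma carrier_zero[simp]: "(\<lambda>k. 0) \<in> sv_carrier"
  by (simp add: sv_carrier_def)

lemma carrier_sum: "finite S \<Longrightarrow> (\<And>j. j \<in> S \<Longrightarrow> g j \<in> sv_carrier) \<Longrightarrow> (\<lambda>k. \<Sum>j\<in>S. g j k) \<in> sv_carrier"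
proof (induction S rule: finite_induct)
  case empty then show ?case by simp
next
  case (insert x F)
  then show ?case using carrier_add[of "g x" "\<lambda>k. \<Sum>j\<in>F. g j k"] by simp
qed

lemma br_add_left:
  assumes "f \<in> sv_carrier" "g \<in> sv_carrier"
  shows "sv_br (\<lambda>k. f k + g k) h = (\<lambda>k. sv_br f h k + sv_br g h k)"
proof (cases "finite (supp h)")
  case True
  let ?S = "supp f \<union> supp g"
  have fS: "finite ?S" using assms carrier_iff by auto
  have s: "supp (\<lambda>k. f k + g k) \<subseteq> ?S" by (auto simp: supp_def)
  show ?thesis
    apply (rule ext)
    apply (subst sv_br_sets[OF fS True s order_refl])
    apply (subst sv_br_sets[OF fS True _ order_refl, of f], force)
    apply (subst sv_br_sets[OF fS True _ order_refl, of g], force)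
    by (simp add: sum.distrib[symmetric] distrib_right)
next
  case False then show ?thesis by (simp add: sv_br_inf2)
qed

lemma br_scale_left:
  shows "sv_br (\<lambda>k. c * f k) h = (\<lambda>k. c * sv_br f h k)"
proof (cases "finite (supp h) \<and> finite (supp f)")
  case True
  have s: "supp (\<lambda>k. c * f k) \<subseteq> supp f" by (auto simp: supp_def)
  show ?thesis
    apply (rule ext)
    apply (subst sv_br_sets[of "supp f" "supp h"]) using True s apply auto[4]
    apply (subst sv_br_sets[of "supp f" "supp h"]) using True apply auto[4]
    by (simp add: sum_distrib_left mult.assoc)
next
  case False
  show ?thesis
  proof (cases "c = 0")
    case True then show ?thesis by (simp add: sv_br_def)
  next
    case c: False
    have "supp (\<lambda>k. c * f k) = supp f" using c by (auto simp: supp_def)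
    then show ?thesis using False
      by (cases "finite (supp h)") (auto simp: sv_br_inf1 sv_br_inf2)
  qed
qed

lemma br_add_right:
  assumes "f \<in> sv_carrier" "g \<in> sv_carrier"
  shows "sv_br h (\<lambda>k. f k + g k) = (\<lambda>k. sv_br h f k + sv_br h g k)"
proof (cases "finite (supp h)")
  case True
  let ?S = "supp f \<union> supp g"
  have fS: "finite ?S" using assms carrier_iff by auto
  have s: "supp (\<lambda>k. f k + g k) \<subseteq> ?S" by (auto simp: supp_def)
  show ?thesis
    apply (rule ext)
    apply (subst sv_br_sets[OF True fS order_refl s])
    apply (subst sv_br_sets[OF True fS order_refl, of f], force)
    apply (subst sv_br_sets[OF True fS order_refl, of g], force)
    by (simp add: sum.distrib[symmetric] distrib_right distrib_left)
next
  case False then show ?thesis by (simp add: sv_br_inf1)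
qed

lemma br_scale_right:
  shows "sv_br h (\<lambda>k. c * f k) = (\<lambda>k. c * sv_br h f k)"
proof (cases "finite (supp h) \<and> finite (supp f)")
  case True
  have s: "supp (\<lambda>k. c * f k) \<subseteq> supp f" by (auto simp: supp_def)
  show ?thesis
    apply (rule ext)
    apply (subst sv_br_sets[of "supp h" "supp f"]) using True s apply auto[4]
    apply (subst sv_br_sets[of "supp h" "supp f"]) using True apply auto[4]
    by (simp add: sum_distrib_left mult.assoc mult.left_commute)
next
  case False
  show ?thesis
  proof (cases "c = 0")
    case True then show ?thesis by (simp add: sv_br_def)
  next
    case c: False
    have "supp (\<lambda>k. c * f k) = supp f" using c by (auto simp: supp_def)
    then show ?thesis using False
      by (cases "finite (supp h)") (auto simp: sv_br_inf1 sv_br_inf2)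
  qed
qed

lemma br_sum_left:
  assumes "finite S" "\<And>j. j \<in> S \<Longrightarrow> g j \<in> sv_carrier"
  shows "sv_br (\<lambda>k. \<Sum>j\<in>S. g j k) h = (\<lambda>k. \<Sum>j\<in>S. sv_br (g j) h k)"
  using assms
proof (induction S rule: finite_induct)
  case empty
  then show ?case by (simp add: sv_br_def)
next
  case (insert x F)
  have "sv_br (\<lambda>k. \<Sum>j\<in>insert x F. g j k) h = sv_br (\<lambda>k. g x k + (\<Sum>j\<in>F. g j k)) h"
    using insert by simp
  also have "\<dots> = (\<lambda>k. sv_br (g x) h k + sv_br (\<lambda>k. \<Sum>j\<in>F. g j k) h k)"
    by (rule br_add_left) (use insert carrier_sum in auto)
  finally show ?case using insert by simp
qed

lemma br_sum_right:
  assumes "finite S" "\<And>j. j \<in> S \<Longrightarrow> g j \<in> sv_carrier"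
  shows "sv_br h (\<lambda>k. \<Sum>j\<in>S. g j k) = (\<lambda>k. \<Sum>j\<in>S. sv_br h (g j) k)"
  using assms
proof (induction S rule: finite_induct)
  case empty
  then show ?case by (simp add: sv_br_def)
next
  case (insert x F)
  have "sv_br h (\<lambda>k. \<Sum>j\<in>insert x F. g j k) = sv_br h (\<lambda>k. g x k + (\<Sum>j\<in>F. g j k))"
    using insert by simp
  also have "\<dots> = (\<lambda>k. sv_br h (g x) k + sv_br h (\<lambda>k. \<Sum>j\<in>F. g j k) k)"
    by (rule br_add_right) (use insert carrier_sum in auto)
  finally show ?case using insert by simp
qed

lemma expand:
  assumes "finite S" "supp f \<subseteq> S"
  shows "f = (\<lambda>k. \<Sum>j\<in>S. f j * eb j k)"
proof
  fix k
  have "(\<Sum>j\<in>S. f j * eb j k) = (if k \<in> S then f k else 0)"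
    by (simp add: eb_def assms(1) if_distrib cong: if_cong)
  then show "f k = (\<Sum>j\<in>S. f j * eb j k)" using assms by (auto simp: supp_def)
qed

lemma lin_zero: "sv_linear D \<Longrightarrow> D (\<lambda>k. 0) = (\<lambda>k. 0)"
proof -
  assume "sv_linear D"
  then have "\<forall>x\<in>sv_carrier. D (\<lambda>k. 0 * x k) = (\<lambda>k. 0 * D x k)"
    unfolding sv_linear_def by blast
  from this[rule_format, OF carrier_zero] show ?thesis by simp
qed

lemma lin_sum:
  assumes "sv_linear D" "finite S" "\<And>j. j \<in> S \<Longrightarrow> g j \<in> sv_carrier"
  shows "D (\<lambda>k. \<Sum>j\<in>S. g j k) = (\<lambda>k. \<Sum>j\<in>S. D (g j) k)"
  using assms(2,3)
proof (induction S rule: finite_induct)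
  case empty
  then show ?case using lin_zero[OF assms(1)] by simp
next
  case (insert x F)
  have "D (\<lambda>k. \<Sum>j\<in>insert x F. g j k) = D (\<lambda>k. g x k + (\<Sum>j\<in>F. g j k))"
    using insert by simp
  also have "\<dots> = (\<lambda>k. D (g x) k + D (\<lambda>k. \<Sum>j\<in>F. g j k) k)"
    using assms(1) insert carrier_sum[of F g] unfolding sv_linear_def by auto
  finally show ?case using insert by simp
qed

lemma lin_expand:
  assumes "sv_linear D" "f \<in> sv_carrier"
  shows "D f = (\<lambda>k. \<Sum>j\<in>supp f. f j * D (eb j) k)"
proof -
  have fin: "finite (supp f)" using assms carrier_iff by auto
  have "D f = D (\<lambda>k. \<Sum>j\<in>supp f. f j * eb j k)"
    using expand[OF fin order_refl] by metis
  also have "\<dots> = (\<lambda>k. \<Sum>j\<in>supp f. D (\<lambda>k. f j * eb j k) k)"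
    by (rule lin_sum[OF assms(1) fin]) (simp add: carrier_scale)
  also have "\<dots> = (\<lambda>k. \<Sum>j\<in>supp f. f j * D (eb j) k)"
    using assms(1) unfolding sv_linear_def by auto
  finally show ?thesis .
qed

lemma br_linear: "sv_linear (sv_br a)"
  unfolding sv_linear_def using sv_br_carrier br_add_right br_scale_right by blast

lemma agree_on_basis:
  assumes "sv_linear D" "sv_linear E" "\<And>j. D (eb j) = E (eb j)" "f \<in> sv_carrier"
  shows "D f = E f"
  using lin_expand[OF assms(1,4)] lin_expand[OF assms(2,4)] assms(3) by simp


lemma br_right_eb: "a \<in> sv_carrier \<Longrightarrow> sv_br a (eb j) k = (\<Sum>i\<in>supp a. a i * sv_bb i j k)"
proof -
  assume a: "a \<in> sv_carrier"
  have "sv_br a (eb j) k = (\<Sum>i\<in>supp a. \<Sum>j'\<in>{j}. a i * eb j j' * sv_bb i j' k)"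
    by (rule sv_br_sets) (use a in \<open>auto simp: carrier_iff supp_eb\<close>)
  then show ?thesis by (simp add: eb_def)
qed

lemma br_left_eb: "y \<in> sv_carrier \<Longrightarrow> sv_br (eb i) y k = (\<Sum>j\<in>supp y. y j * sv_bb i j k)"
proof -
  assume a: "y \<in> sv_carrier"
  have "sv_br (eb i) y k = (\<Sum>i'\<in>{i}. \<Sum>j\<in>supp y. eb i i' * y j * sv_bb i' j k)"
    by (rule sv_br_sets) (use a in \<open>auto simp: carrier_iff supp_eb\<close>)
  then show ?thesis by (simp add: eb_def)
qed

lemma sum_single:
  assumes "finite (supp a)" "\<And>i. i \<noteq> q \<Longrightarrow> a i * h i = 0"
  shows "(\<Sum>i\<in>supp a. a i * h i) = a q * h q"
proof (cases "q \<in> supp a")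
  case True
  then have "(\<Sum>i\<in>supp a. a i * h i) = a q * h q + (\<Sum>i\<in>supp a - {q}. a i * h i)"
    using sum.remove[OF assms(1) True, of "\<lambda>i. a i * h i"] by simp
  also have "(\<Sum>i\<in>supp a - {q}. a i * h i) = 0"
    by (rule sum.neutral) (use assms(2) in blast)
  finally show ?thesis by simp
next
  case False
  then have "a q = 0" by (simp add: supp_def)
  moreover have "(\<Sum>i\<in>supp a. a i * h i) = 0"
    by (rule sum.neutral) (metis False assms(2))
  ultimately show ?thesis by simp
qed

lemma R1: "a \<in> sv_carrier \<Longrightarrow> sv_br a (eb (Lb w)) (Lb z) = a (Lb (z - w)) * of_int (z - 2*w)"
  apply (simp add: br_right_eb)
  apply (subst sum_single[where q="Lb (z - w)"])
  apply (simp add: carrier_iff)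
  subgoal for i by (cases i) simp_all
  by simp

lemma R2: "a \<in> sv_carrier \<Longrightarrow> sv_br a (eb (Lb w)) (Gb z) = a (Gb (z - w)) * (of_int z - 3/2 * of_int w)"
  apply (simp add: br_right_eb)
  apply (subst sum_single[where q="Gb (z - w)"])
  apply (simp add: carrier_iff)
  subgoal for i by (cases i) simp_all
  by (simp add: field_simps)

lemma R3: "a \<in> sv_carrier \<Longrightarrow> sv_br a (eb (Lb w)) Cb = a (Lb (- w)) * ((of_int w - of_int w ^ 3) / 12)"
  apply (simp add: br_right_eb)
  apply (subst sum_single[where q="Lb (- w)"])
  apply (simp add: carrier_iff)
  subgoal for i by (cases i) simp_all
  by simp

lemma R4: "a \<in> sv_carrier \<Longrightarrow> sv_br a (eb (Gb w)) (Lb z) = 2 * a (Gb (z - w))"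
  apply (simp add: br_right_eb)
  apply (subst sum_single[where q="Gb (z - w)"])
  apply (simp add: carrier_iff)
  subgoal for i by (cases i) simp_all
  by simp

lemma R5: "a \<in> sv_carrier \<Longrightarrow> sv_br a (eb (Gb w)) (Gb z) = a (Lb (z - w)) * ((of_int z - of_int w) / 2 - of_int w)"
  apply (simp add: br_right_eb)
  apply (subst sum_single[where q="Lb (z - w)"])
  apply (simp add: carrier_iff)
  subgoal for i by (cases i) simp_all
  by simp

lemma R6: "a \<in> sv_carrier \<Longrightarrow> sv_br a (eb (Gb w)) Cb = a (Gb (- w)) * ((of_int w ^ 2 - 1/4) / 3)"
  apply (simp add: br_right_eb)
  apply (subst sum_single[where q="Gb (- w)"])
  apply (simp add: carrier_iff)
  subgoal for i by (cases i) simp_all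
  by simp

lemma eb_set: "{j. eb i j \<noteq> 0} = {i}" by (auto simp: eb_def)

lemma R7: "sv_br a (eb Cb) = (\<lambda>k. 0)"
  by (simp add: sv_br_def eb_set)

lemma L1: "y \<in> sv_carrier \<Longrightarrow> sv_br (eb (Lb m)) y (Lb z) = y (Lb (z - m)) * of_int (2*m - z)"
  apply (simp add: br_left_eb)
  apply (subst sum_single[where q="Lb (z - m)"])
  apply (simp add: carrier_iff)
  subgoal for i by (cases i) simp_all
  by simp

lemma L2: "y \<in> sv_carrier \<Longrightarrow> sv_br (eb (Lb m)) y (Gb z) = y (Gb (z - m)) * (3/2 * of_int m - of_int z)"
  apply (simp add: br_left_eb)
  apply (subst sum_single[where q="Gb (z - m)"])
  apply (simp add: carrier_iff)
  subgoal for i by (cases i) simp_all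
  by (simp add: field_simps)

lemma L3: "y \<in> sv_carrier \<Longrightarrow> sv_br (eb (Lb m)) y Cb = y (Lb (- m)) * ((of_int m ^ 3 - of_int m) / 12)"
  apply (simp add: br_left_eb)
  apply (subst sum_single[where q="Lb (- m)"])
  apply (simp add: carrier_iff)
  subgoal for i by (cases i) simp_all
  by simp

lemma L4: "y \<in> sv_carrier \<Longrightarrow> sv_br (eb (Gb r)) y (Lb z) = 2 * y (Gb (z - r))"
  apply (simp add: br_left_eb)
  apply (subst sum_single[where q="Gb (z - r)"])
  apply (simp add: carrier_iff)
  subgoal for i by (cases i) simp_all
  by simp

lemma L5: "y \<in> sv_carrier \<Longrightarrow> sv_br (eb (Gb r)) y (Gb z) = y (Lb (z - r)) * ((3 * of_int r - of_int z) / 2)"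
  apply (simp add: br_left_eb)
  apply (subst sum_single[where q="Lb (z - r)"])
  apply (simp add: carrier_iff)
  subgoal for i by (cases i) simp_all
  by (simp add: field_simps)

lemma L6: "y \<in> sv_carrier \<Longrightarrow> sv_br (eb (Gb r)) y Cb = y (Gb (- r)) * ((of_int r ^ 2 - 1/4) / 3)"
  apply (simp add: br_left_eb)
  apply (subst sum_single[where q="Gb (- r)"])
  apply (simp add: carrier_iff)
  subgoal for i by (cases i) simp_all
  by simp

lemma L7: "sv_br (eb Cb) y = (\<lambda>k. 0)"
  by (simp add: sv_br_def eb_set)


definition sg :: "bool \<Rightarrow> bool \<Rightarrow> complex" where "sg p q = (if p \<and> q then -1 else 1)"

lemma bb_carrier[simp]: "sv_bb i j \<in> sv_carrier"
  using sv_br_carrier[of "eb i" "eb j"] by (simp add: sv_br_eb)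

lemmas FR = R1 R2 R3 R4 R5 R6 R7 L1 L2 L3 L4 L5 L6 L7

lemma jacobi_basis:
  "sv_br (eb i) (sv_bb j l) k = sv_br (sv_bb i j) (eb l) k + sg (sv_par i) (sv_par j) * sv_br (eb j) (sv_bb i l) k"
  apply (cases i; cases j; cases l; cases k; (simp add: FR sg_def)?; ((intro impI)?, (drule arg_cong[where f="complex_of_int"])?,
     (simp only: of_int_add of_int_diff of_int_minus of_int_mult)?,
     (simp add: field_simps power2_eq_square power3_eq_cube)?,
     (thin_tac "i = _", thin_tac "j = _", thin_tac "l = _", thin_tac "k = _")?, algebra?))
  done


lemma bl_exp:
  assumes "finite S" "supp f \<subseteq> S"
  shows "sv_br f g = (\<lambda>k. \<Sum>i\<in>S. f i * sv_br (eb i) g k)"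
proof -
  have "sv_br f g = sv_br (\<lambda>k. \<Sum>i\<in>S. f i * eb i k) g"
    using expand[OF assms] by metis
  also have "\<dots> = (\<lambda>k. \<Sum>i\<in>S. sv_br (\<lambda>k. f i * eb i k) g k)"
    by (rule br_sum_left[OF assms(1)]) (simp add: carrier_scale)
  also have "\<dots> = (\<lambda>k. \<Sum>i\<in>S. f i * sv_br (eb i) g k)"
    by (simp add: br_scale_left)
  finally show ?thesis .
qed

lemma br_exp:
  assumes "finite T" "supp g \<subseteq> T"
  shows "sv_br f g = (\<lambda>k. \<Sum>j\<in>T. g j * sv_br f (eb j) k)"
proof -
  have "sv_br f g = sv_br f (\<lambda>k. \<Sum>j\<in>T. g j * eb j k)"
    using expand[OF assms] by metis
  also have "\<dots> = (\<lambda>k. \<Sum>j\<in>T. sv_br f (\<lambda>k. g j * eb j k) k)"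
    by (rule br_sum_right[OF assms(1)]) (simp add: carrier_scale)
  also have "\<dots> = (\<lambda>k. \<Sum>j\<in>T. g j * sv_br f (eb j) k)"
    by (simp add: br_scale_right)
  finally show ?thesis .
qed

lemma br_as_fun:
  assumes "x \<in> sv_carrier" "y \<in> sv_carrier"
  shows "sv_br x y = (\<lambda>k. \<Sum>j\<in>supp x. \<Sum>l\<in>supp y. x j * y l * sv_bb j l k)"
  using assms by (intro ext sv_br_sets) (auto simp: carrier_iff)

lemma sum_swap3b:
  "(\<Sum>i\<in>A. \<Sum>l\<in>C. \<Sum>j\<in>B. f i j l) = (\<Sum>l\<in>C. \<Sum>j\<in>B. \<Sum>i\<in>A. f i j l)"
proof -
  have "(\<Sum>i\<in>A. \<Sum>l\<in>C. \<Sum>j\<in>B. f i j l) = (\<Sum>l\<in>C. \<Sum>i\<in>A. \<Sum>j\<in>B. f i j l)"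
    by (rule sum.swap)
  also have "\<dots> = (\<Sum>l\<in>C. \<Sum>j\<in>B. \<Sum>i\<in>A. f i j l)"
    by (rule sum.cong[OF refl], rule sum.swap)
  finally show ?thesis .
qed

lemma tri1:
  assumes "a \<in> sv_carrier" "x \<in> sv_carrier" "y \<in> sv_carrier"
  shows "sv_br a (sv_br x y) k = (\<Sum>j\<in>supp x. \<Sum>l\<in>supp y. \<Sum>i\<in>supp a. a i * (x j * y l * sv_br (eb i) (sv_bb j l) k))"
proof -
  have fx: "finite (supp x)" and fy: "finite (supp y)" and fa: "finite (supp a)" using assms carrier_iff by auto
  have "sv_br a (sv_br x y) = sv_br a (\<lambda>k. \<Sum>j\<in>supp x. \<Sum>l\<in>supp y. x j * y l * sv_bb j l k)"
    using br_as_fun[OF assms(2,3)] by simp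
  also have "\<dots> = (\<lambda>k. \<Sum>j\<in>supp x. sv_br a (\<lambda>k. \<Sum>l\<in>supp y. x j * y l * sv_bb j l k) k)"
    by (rule br_sum_right[OF fx]) (rule carrier_sum[OF fy], rule carrier_scale, rule bb_carrier)
  also have "\<dots> = (\<lambda>k. \<Sum>j\<in>supp x. \<Sum>l\<in>supp y. sv_br a (\<lambda>k. x j * y l * sv_bb j l k) k)"
    by (subst br_sum_right[OF fy]) (simp_all add: carrier_scale)
  also have "\<dots> = (\<lambda>k. \<Sum>j\<in>supp x. \<Sum>l\<in>supp y. x j * y l * sv_br a (sv_bb j l) k)"
    by (simp add: br_scale_right)
  finally have "sv_br a (sv_br x y) k = (\<Sum>j\<in>supp x. \<Sum>l\<in>supp y. x j * y l * sv_br a (sv_bb j l) k)"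
    by simp
  also have "\<dots> = (\<Sum>j\<in>supp x. \<Sum>l\<in>supp y. x j * y l * (\<Sum>i\<in>supp a. a i * sv_br (eb i) (sv_bb j l) k))"
    by (subst bl_exp[OF fa order_refl]) simp
  also have "\<dots> = (\<Sum>j\<in>supp x. \<Sum>l\<in>supp y. \<Sum>i\<in>supp a. a i * (x j * y l * sv_br (eb i) (sv_bb j l) k))"
    by (simp add: sum_distrib_left mult_ac)
  finally show ?thesis .
qed

lemma tri2:
  assumes "a \<in> sv_carrier" "x \<in> sv_carrier" "y \<in> sv_carrier"
  shows "sv_br (sv_br a x) y k = (\<Sum>j\<in>supp x. \<Sum>l\<in>supp y. \<Sum>i\<in>supp a. a i * (x j * y l * sv_br (sv_bb i j) (eb l) k))"
proof -
  have fx: "finite (supp x)" and fy: "finite (supp y)" and fa: "finite (supp a)" using assms carrier_iff by auto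
  have "sv_br (sv_br a x) y = sv_br (\<lambda>k. \<Sum>i\<in>supp a. \<Sum>j\<in>supp x. a i * x j * sv_bb i j k) y"
    using br_as_fun[OF assms(1,2)] by simp
  also have "\<dots> = (\<lambda>k. \<Sum>i\<in>supp a. sv_br (\<lambda>k. \<Sum>j\<in>supp x. a i * x j * sv_bb i j k) y k)"
    by (rule br_sum_left[OF fa]) (rule carrier_sum[OF fx], rule carrier_scale, rule bb_carrier)
  also have "\<dots> = (\<lambda>k. \<Sum>i\<in>supp a. \<Sum>j\<in>supp x. sv_br (\<lambda>k. a i * x j * sv_bb i j k) y k)"
    by (subst br_sum_left[OF fx]) (simp_all add: carrier_scale)
  also have "\<dots> = (\<lambda>k. \<Sum>i\<in>supp a. \<Sum>j\<in>supp x. a i * x j * sv_br (sv_bb i j) y k)"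
    by (simp add: br_scale_left)
  finally have "sv_br (sv_br a x) y k = (\<Sum>i\<in>supp a. \<Sum>j\<in>supp x. a i * x j * sv_br (sv_bb i j) y k)"
    by simp
  also have "\<dots> = (\<Sum>i\<in>supp a. \<Sum>j\<in>supp x. a i * x j * (\<Sum>l\<in>supp y. y l * sv_br (sv_bb i j) (eb l) k))"
    by (subst br_exp[OF fy order_refl]) simp
  also have "\<dots> = (\<Sum>i\<in>supp a. \<Sum>j\<in>supp x. \<Sum>l\<in>supp y. a i * (x j * y l * sv_br (sv_bb i j) (eb l) k))"
    by (simp add: sum_distrib_left mult_ac)
  also have "\<dots> = (\<Sum>j\<in>supp x. \<Sum>i\<in>supp a. \<Sum>l\<in>supp y. a i * (x j * y l * sv_br (sv_bb i j) (eb l) k))"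
    by (rule sum.swap)
  also have "\<dots> = (\<Sum>j\<in>supp x. \<Sum>l\<in>supp y. \<Sum>i\<in>supp a. a i * (x j * y l * sv_br (sv_bb i j) (eb l) k))"
    by (rule sum.cong[OF refl], rule sum.swap)
  finally show ?thesis .
qed

lemma tri3:
  assumes "a \<in> sv_carrier" "x \<in> sv_carrier" "y \<in> sv_carrier"
  shows "sv_br x (sv_br a y) k = (\<Sum>j\<in>supp x. \<Sum>l\<in>supp y. \<Sum>i\<in>supp a. a i * (x j * y l * sv_br (eb j) (sv_bb i l) k))"
proof -
  have fx: "finite (supp x)" and fy: "finite (supp y)" and fa: "finite (supp a)" using assms carrier_iff by auto
  have "sv_br x (sv_br a y) = sv_br x (\<lambda>k. \<Sum>i\<in>supp a. \<Sum>l\<in>supp y. a i * y l * sv_bb i l k)"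
    using br_as_fun[OF assms(1,3)] by simp
  also have "\<dots> = (\<lambda>k. \<Sum>i\<in>supp a. sv_br x (\<lambda>k. \<Sum>l\<in>supp y. a i * y l * sv_bb i l k) k)"
    by (rule br_sum_right[OF fa]) (rule carrier_sum[OF fy], rule carrier_scale, rule bb_carrier)
  also have "\<dots> = (\<lambda>k. \<Sum>i\<in>supp a. \<Sum>l\<in>supp y. sv_br x (\<lambda>k. a i * y l * sv_bb i l k) k)"
    by (subst br_sum_right[OF fy]) (simp_all add: carrier_scale)
  also have "\<dots> = (\<lambda>k. \<Sum>i\<in>supp a. \<Sum>l\<in>supp y. a i * y l * sv_br x (sv_bb i l) k)"
    by (simp add: br_scale_right)
  finally have "sv_br x (sv_br a y) k = (\<Sum>i\<in>supp a. \<Sum>l\<in>supp y. a i * y l * sv_br x (sv_bb i l) k)"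
    by simp
  also have "\<dots> = (\<Sum>i\<in>supp a. \<Sum>l\<in>supp y. a i * y l * (\<Sum>j\<in>supp x. x j * sv_br (eb j) (sv_bb i l) k))"
    by (subst bl_exp[OF fx order_refl]) simp
  also have "\<dots> = (\<Sum>i\<in>supp a. \<Sum>l\<in>supp y. \<Sum>j\<in>supp x. a i * (x j * y l * sv_br (eb j) (sv_bb i l) k))"
    by (simp add: sum_distrib_left mult_ac)
  also have "\<dots> = (\<Sum>l\<in>supp y. \<Sum>j\<in>supp x. \<Sum>i\<in>supp a. a i * (x j * y l * sv_br (eb j) (sv_bb i l) k))"
    by (rule sum_swap3b)
  also have "\<dots> = (\<Sum>j\<in>supp x. \<Sum>l\<in>supp y. \<Sum>i\<in>supp a. a i * (x j * y l * sv_br (eb j) (sv_bb i l) k))"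
    by (rule sum.swap)
  finally show ?thesis .
qed

lemma hom_par: "sv_hom p x \<Longrightarrow> i \<in> supp x \<Longrightarrow> sv_par i = p"
  by (simp add: sv_hom_def supp_def)

lemma jacobi:
  assumes "sv_hom p a" "sv_hom q x" "y \<in> sv_carrier"
  shows "sv_br a (sv_br x y) = (\<lambda>k. sv_br (sv_br a x) y k + sg p q * sv_br x (sv_br a y) k)"
proof
  fix k
  have ac: "a \<in> sv_carrier" "x \<in> sv_carrier" using assms by (auto simp: sv_hom_def)
  have "sv_br a (sv_br x y) k = (\<Sum>j\<in>supp x. \<Sum>l\<in>supp y. \<Sum>i\<in>supp a. a i * (x j * y l * sv_br (eb i) (sv_bb j l) k))"
    by (rule tri1[OF ac assms(3)])
  also have "\<dots> = (\<Sum>j\<in>supp x. \<Sum>l\<in>supp y. \<Sum>i\<in>supp a. a i * (x j * y l * sv_br (sv_bb i j) (eb l) k)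
       + sg p q * (a i * (x j * y l * sv_br (eb j) (sv_bb i l) k)))"
    apply (intro sum.cong refl)
    apply (subst jacobi_basis)
    using hom_par[OF assms(1)] hom_par[OF assms(2)] by (simp add: algebra_simps)
  also have "\<dots> = sv_br (sv_br a x) y k + sg p q * sv_br x (sv_br a y) k"
    by (simp add: tri2[OF ac assms(3)] tri3[OF ac assms(3)] sum.distrib sum_distrib_left)
  finally show "sv_br a (sv_br x y) k = sv_br (sv_br a x) y k + sg p q * sv_br x (sv_br a y) k" .
qed

lemma br_hom:
  assumes "sv_hom p a" "sv_hom q x"
  shows "sv_hom (p \<noteq> q) (sv_br a x)"
proof -
  have ac: "a \<in> sv_carrier" "x \<in> sv_carrier" using assms by (auto simp: sv_hom_def)
  have "sv_par k = (p \<noteq> q)" if k: "sv_br a x k \<noteq> 0" for k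
  proof -
    from k obtain i j where "i \<in> supp a" "j \<in> supp x" "sv_bb i j k \<noteq> 0"
      using br_as_fun[OF ac] by (metis (mono_tags, lifting) mult_eq_0_iff sum.neutral)
    then show ?thesis using bb_par hom_par assms by metis
  qed
  then show ?thesis using sv_br_carrier by (simp add: sv_hom_def)
qed

lemma ad_derivation:
  assumes "sv_hom p a"
  shows "sv_derivation p (sv_br a)"
  unfolding sv_derivation_def
proof (intro conjI allI impI)
  show "sv_linear (sv_br a)" by (rule br_linear)
  show "sv_hom (p \<noteq> q) (sv_br a x)" if "sv_hom q x" for q x using br_hom[OF assms that] .
  show "sv_br a (sv_br x y) = (\<lambda>k. sv_br (sv_br a x) y k + (if p \<and> q then - 1 else 1) * sv_br x (sv_br a y) k)"
    if "sv_hom q x" "sv_hom r y" for q r x y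
    using jacobi[OF assms that(1)] that(2) by (simp add: sv_hom_def sg_def)
qed

lemma ad_Der:
  assumes "a \<in> sv_carrier"
  shows "sv_Der (sv_br a)"
proof -
  define a0 where "a0 = (\<lambda>i. if sv_par i then 0 else a i)"
  define a1 where "a1 = (\<lambda>i. if sv_par i then a i else 0)"
  have s0: "supp a0 \<subseteq> supp a" and s1: "supp a1 \<subseteq> supp a" by (auto simp: a0_def a1_def supp_def)
  have c0: "a0 \<in> sv_carrier" and c1: "a1 \<in> sv_carrier"
    using s0 s1 assms by (meson carrier_iff finite_subset)+
  have h0: "sv_hom False a0" using c0 by (auto simp: sv_hom_def a0_def)
  have h1: "sv_hom True a1" using c1 by (auto simp: sv_hom_def a1_def)
  have "a = (\<lambda>k. a0 k + a1 k)" by (auto simp: a0_def a1_def)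
  then have "sv_br a x = (\<lambda>k. sv_br a0 x k + sv_br a1 x k)" for x
    using br_add_left[OF c0 c1] by metis
  then show ?thesis unfolding sv_Der_def using ad_derivation[OF h0] ad_derivation[OF h1] by blast
qed


lemma eb_hom: "sv_hom (sv_par j) (eb j)"
  using eb_carrier[of j] unfolding sv_hom_def eb_def by auto

lemma der_lin: "sv_derivation p D \<Longrightarrow> sv_linear D"
  by (simp add: sv_derivation_def)

lemma der_hom: "sv_derivation p D \<Longrightarrow> sv_hom q x \<Longrightarrow> sv_hom (p \<noteq> q) (D x)"
  unfolding sv_derivation_def by blast

lemma der_car: "sv_derivation p D \<Longrightarrow> D (eb j) \<in> sv_carrier"
  using der_hom[OF _ eb_hom[of j]] unfolding sv_hom_def by blast

lemma der_par: "sv_derivation p D \<Longrightarrow> D (eb j) i \<noteq> 0 \<Longrightarrow> sv_par i = (p \<noteq> sv_par j)"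
  using der_hom[OF _ eb_hom[of j]] unfolding sv_hom_def by blast

lemma lin_comb:
  assumes "sv_linear D" "finite S"
  shows "D (\<lambda>k. \<Sum>h\<in>S. c h * eb h k) = (\<lambda>k. \<Sum>h\<in>S. c h * D (eb h) k)"
proof -
  have "D (\<lambda>k. \<Sum>h\<in>S. c h * eb h k) = (\<lambda>k. \<Sum>h\<in>S. D (\<lambda>k. c h * eb h k) k)"
    by (rule lin_sum[OF assms]) (simp add: carrier_scale)
  also have "\<dots> = (\<lambda>k. \<Sum>h\<in>S. c h * D (eb h) k)"
    using assms(1) unfolding sv_linear_def by simp
  finally show ?thesis .
qed

lemma bb_expand: "sv_bb f g = (\<lambda>k. \<Sum>h\<in>{Lb (wt f + wt g), Gb (wt f + wt g), Cb}. sv_bb f g h * eb h k)"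
  by (rule expand) (use bb_supp in \<open>auto simp: supp_def\<close>)

lemma leib:
  assumes D: "sv_derivation p D"
  shows "(\<Sum>h\<in>{Lb (wt f + wt g), Gb (wt f + wt g), Cb}. sv_bb f g h * D (eb h) i)
     = sv_br (D (eb f)) (eb g) i + sg p (sv_par f) * sv_br (eb f) (D (eb g)) i"
proof -
  have "D (sv_br (eb f) (eb g)) = (\<lambda>k. sv_br (D (eb f)) (eb g) k + (if p \<and> sv_par f then -1 else 1) * sv_br (eb f) (D (eb g)) k)"
    using D eb_hom[of f] eb_hom[of g] unfolding sv_derivation_def by blast
  moreover have "D (sv_br (eb f) (eb g)) = (\<lambda>k. \<Sum>h\<in>{Lb (wt f + wt g), Gb (wt f + wt g), Cb}. sv_bb f g h * D (eb h) k)"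
    by (subst sv_br_eb, subst bb_expand, rule lin_comb[OF der_lin[OF D]]) simp
  ultimately show ?thesis by (simp add: sg_def fun_eq_iff)
qed

lemma bb_L0: "sv_bb (Lb 0) g = (\<lambda>k. - of_int (wt g) * eb g k)"
  by (cases g) (auto simp: eb_def fun_eq_iff)

lemma br_L0_left: "y \<in> sv_carrier \<Longrightarrow> sv_br (eb (Lb 0)) y i = - of_int (wt i) * y i"
  by (cases i) (simp_all add: FR)

lemma B1_rel:
  assumes D: "sv_derivation p D"
  shows "of_int (wt i - wt g) * D (eb g) i = sv_br (D (eb (Lb 0))) (eb g) i"
proof -
  have L: "sv_linear D" using der_lin[OF D] .
  have "D (sv_br (eb (Lb 0)) (eb g)) = (\<lambda>k. sv_br (D (eb (Lb 0))) (eb g) k + (if p \<and> sv_par (Lb 0) then -1 else 1) * sv_br (eb (Lb 0)) (D (eb g)) k)"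
    using D eb_hom[of "Lb 0"] eb_hom[of g] unfolding sv_derivation_def by blast
  moreover have "D (sv_br (eb (Lb 0)) (eb g)) = (\<lambda>k. - of_int (wt g) * D (eb g) k)"
    using L eb_carrier unfolding sv_br_eb bb_L0 sv_linear_def by blast
  ultimately have "- of_int (wt g) * D (eb g) i = sv_br (D (eb (Lb 0))) (eb g) i - of_int (wt i) * D (eb g) i"
    using br_L0_left[OF der_car[OF D]] by (simp add: fun_eq_iff)
  then show ?thesis by (simp add: algebra_simps)
qed

definition bdiv :: "(sv_idx \<Rightarrow> complex) \<Rightarrow> sv_idx \<Rightarrow> complex" where
  "bdiv u = (\<lambda>i. if wt i = 0 then 0 else u i / of_int (wt i))"

lemma bdiv_supp: "supp (bdiv u) \<subseteq> supp u"
  by (auto simp: bdiv_def supp_def)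

lemma bdiv_car: "u \<in> sv_carrier \<Longrightarrow> bdiv u \<in> sv_carrier"
  by (meson bdiv_supp carrier_iff finite_subset)

lemma bdiv_br1:
  assumes u: "u \<in> sv_carrier" and ne: "wt i \<noteq> wt g"
  shows "sv_br (bdiv u) (eb g) i = sv_br u (eb g) i / of_int (wt i - wt g)"
proof -
  have fu: "finite (supp u)" using u carrier_iff by auto
  have "sv_br (bdiv u) (eb g) i = (\<Sum>i'\<in>supp u. \<Sum>j\<in>{g}. bdiv u i' * eb g j * sv_bb i' j i)"
    by (rule sv_br_sets) (use fu bdiv_supp in \<open>auto simp: supp_eb\<close>)
  also have "\<dots> = (\<Sum>i'\<in>supp u. u i' * sv_bb i' g i / of_int (wt i - wt g))"
  proof (rule sum.cong[OF refl])
    fix i' assume "i' \<in> supp u"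
    show "(\<Sum>j\<in>{g}. bdiv u i' * eb g j * sv_bb i' j i) = u i' * sv_bb i' g i / of_int (wt i - wt g)"
    proof (cases "sv_bb i' g i = 0")
      case True then show ?thesis by (simp add: eb_def)
    next
      case False
      then have "wt i' = wt i - wt g" using bb_wt by force
      then show ?thesis using ne by (simp add: eb_def bdiv_def)
    qed
  qed
  also have "\<dots> = sv_br u (eb g) i / of_int (wt i - wt g)"
    by (simp add: br_right_eb[OF u] sum_divide_distrib)
  finally show ?thesis .
qed

lemma bdiv_br0:
  assumes u: "u \<in> sv_carrier" and eq: "wt i = wt g"
  shows "sv_br (bdiv u) (eb g) i = 0"
proof -
  have "sv_br (bdiv u) (eb g) i = (\<Sum>i'\<in>supp (bdiv u). bdiv u i' * sv_bb i' g i)"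
    by (rule br_right_eb[OF bdiv_car[OF u]])
  also have "\<dots> = 0"
  proof (rule sum.neutral, rule ballI)
    fix i' show "bdiv u i' * sv_bb i' g i = 0"
    proof (cases "sv_bb i' g i = 0")
      case False
      then have "wt i' = 0" using bb_wt eq by force
      then show ?thesis by (simp add: bdiv_def)
    qed simp
  qed
  finally show ?thesis .
qed

lemma B1:
  assumes D: "sv_derivation p D" and ne: "wt i \<noteq> wt g"
  shows "D (eb g) i = sv_br (bdiv (D (eb (Lb 0)))) (eb g) i"
proof -
  have h1: "of_int (wt i - wt g) * D (eb g) i = sv_br (D (eb (Lb 0))) (eb g) i"
    by (rule B1_rel[OF D])
  have h2: "sv_br (bdiv (D (eb (Lb 0)))) (eb g) i = sv_br (D (eb (Lb 0))) (eb g) i / of_int (wt i - wt g)"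
    by (rule bdiv_br1[OF der_car[OF D] ne])
  have nz: "(of_int (wt i - wt g) :: complex) \<noteq> 0" using ne by simp
  show ?thesis unfolding h2 h1[symmetric] using nz by simp
qed

definition cc :: "complex \<Rightarrow> complex \<Rightarrow> sv_idx \<Rightarrow> complex" where
  "cc l m = (\<lambda>k. l * eb (Lb 0) k + m * eb (Gb 0) k)"

lemma cc_car: "cc l m \<in> sv_carrier"
  unfolding cc_def by (intro carrier_add carrier_scale eb_carrier)

lemma cc_vals[simp]: "cc l m (Lb n) = (if n = 0 then l else 0)" "cc l m (Gb n) = (if n = 0 then m else 0)" "cc l m Cb = 0"
  by (auto simp: cc_def eb_def)

lemma cc_br0:
  assumes "wt i \<noteq> wt g"
  shows "sv_br (cc l m) (eb g) i = 0"
proof -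
  have "sv_br (cc l m) (eb g) i = (\<Sum>i'\<in>supp (cc l m). cc l m i' * sv_bb i' g i)"
    by (rule br_right_eb[OF cc_car])
  also have "\<dots> = 0"
  proof (rule sum.neutral, rule ballI)
    fix i' show "cc l m i' * sv_bb i' g i = 0"
    proof (cases "sv_bb i' g i = 0")
      case False
      then have "wt i' \<noteq> 0" using bb_wt assms by force
      then show ?thesis by (cases i') auto
    qed simp
  qed
  finally show ?thesis .
qed


lemma lin_seq:
  fixes f :: "int \<Rightarrow> complex"
  assumes "\<And>r. f r - f (r - 1) = d"
  shows "f r = f 0 + of_int r * d"
proof -
  have pos: "f (int n) = f 0 + of_nat n * d" for n
  proof (induction n)
    case (Suc n)
    have "f (int (Suc n)) = f (int n) + d" using assms[of "int (Suc n)"] by (simp add: algebra_simps)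
    then show ?case using Suc by (simp add: algebra_simps)
  qed simp
  have neg: "f (- int n) = f 0 - of_nat n * d" for n
  proof (induction n)
    case (Suc n)
    have e: "- int (Suc n) = - int n - 1" by simp
    have "f (- int n) - f (- int (Suc n)) = d" using assms[of "- int n"] unfolding e .
    then show ?case using Suc by (simp add: algebra_simps)
  qed simp
  show ?thesis
  proof (cases "r \<ge> 0")
    case True then show ?thesis using pos[of "nat r"] by simp
  next
    case False then show ?thesis using neg[of "nat (- r)"] by simp
  qed
qed

lemma B2_even:
  assumes D: "sv_derivation False D"
  shows "\<exists>l. \<forall>g i. wt i = wt g \<longrightarrow> D (eb g) i = sv_br (cc l 0) (eb g) i"
proof -
  note dc = der_car[OF D]
  define \<alpha> where "\<alpha> m = D (eb (Lb m)) (Lb m)" for m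
  define \<beta> where "\<beta> r = D (eb (Gb r)) (Gb r)" for r
  have par1: "D (eb (Lb m)) (Gb n) = 0" for m n using der_par[OF D, of "Lb m" "Gb n"] by auto
  have par2: "D (eb (Gb m)) (Lb n) = 0" for m n using der_par[OF D, of "Gb m" "Lb n"] by auto
  have par3: "D (eb (Gb m)) Cb = 0" for m using der_par[OF D, of "Gb m" "Cb"] by auto
  have par4: "D (eb Cb) (Gb n) = 0" for n using der_par[OF D, of "Cb" "Gb n"] by auto
  have GG: "\<alpha> (r + s) = \<beta> r + \<beta> s" if "r + s \<noteq> 0" for r s
  proof -
    have "2 * \<alpha> (r + s) = 2 * \<beta> r + 2 * \<beta> s"
      using leib[OF D, of "Gb r" "Gb s" "Lb (r + s)"] that by (simp add: FR dc sg_def \<alpha>_def \<beta>_def)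
    then show ?thesis by (metis distrib_left mult_cancel_left zero_neq_numeral)
  qed
  have LG: "(of_int m / 2 - of_int r) * (\<beta> (m + r) - \<alpha> m - \<beta> r) = 0" for m r
    using leib[OF D, of "Lb m" "Gb r" "Gb (m + r)"] by (simp add: FR dc sg_def \<alpha>_def \<beta>_def algebra_simps)
  have LL1a': "2 * \<alpha> 0 = \<alpha> 1 * 2 + \<alpha> (-1) * 2"
    using leib[OF D, of "Lb 1" "Lb (-1)" "Lb 0"] by (simp add: FR dc sg_def \<alpha>_def)
  have LL1a: "\<alpha> 0 = \<alpha> 1 + \<alpha> (-1)" using LL1a' by algebra
  have LL1b: "D (eb (Lb 0)) Cb = 0"
    using leib[OF D, of "Lb 1" "Lb (-1)" "Cb"] by (simp add: FR dc sg_def \<alpha>_def)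
  have LL2a: "4 * \<alpha> 0 + D (eb Cb) (Lb 0) / 2 = 4 * \<alpha> 2 + 4 * \<alpha> (-2)"
    using leib[OF D, of "Lb 2" "Lb (-2)" "Lb 0"] by (simp add: FR dc sg_def \<alpha>_def)
  have LL2b: "4 * D (eb (Lb 0)) Cb + D (eb Cb) Cb / 2 = \<alpha> 2 / 2 + \<alpha> (-2) / 2"
    using leib[OF D, of "Lb 2" "Lb (-2)" "Cb"] by (simp add: FR dc sg_def \<alpha>_def)
  define \<delta> where "\<delta> = \<alpha> 2 - \<alpha> 1"
  have step: "\<beta> r - \<beta> (r - 1) = \<delta>" for r
  proof -
    have "\<alpha> 1 = \<beta> r + \<beta> (1 - r)" using GG[of r "1 - r"] by simp
    moreover have "\<alpha> 2 = \<beta> r + \<beta> (2 - r)" using GG[of r "2 - r"] by simp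
    moreover have "\<alpha> 1 = \<beta> (r - 1) + \<beta> (2 - r)" using GG[of "r - 1" "2 - r"] by simp
    ultimately show ?thesis unfolding \<delta>_def by (simp add: algebra_simps)
  qed
  have bet: "\<beta> r = \<beta> 0 + of_int r * \<delta>" for r by (rule lin_seq[of \<beta> \<delta>, OF step])
  have alp: "\<alpha> n = \<beta> 0 + \<beta> n" if "n \<noteq> 0" for n using GG[of 0 n] that by simp
  have b0: "\<beta> 0 = 0"
  proof -
    have "(1 / 2) * (\<beta> 1 - \<alpha> 1 - \<beta> 0) = 0" using LG[of 1 0] by simp
    then show ?thesis using alp[of 1] bet[of 1] by simp
  qed
  have bet': "\<beta> r = - (- \<delta>) * of_int r" for r using bet[of r] b0 by simp
  have alp': "\<alpha> n = - (- \<delta>) * of_int n" for n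
  proof (cases "n = 0")
    case True
    then show ?thesis using LL1a alp[of 1] alp[of "-1"] bet[of 1] bet[of "-1"] b0 by simp
  next
    case False then show ?thesis using alp[of n] bet[of n] b0 by simp
  qed
  have C1: "D (eb Cb) (Lb 0) = 0" using LL2a alp'[of 0] alp'[of 2] alp'[of "-2"] by simp
  have C2: "D (eb Cb) Cb = 0" using LL2b LL1b alp'[of 2] alp'[of "-2"] by simp
  show ?thesis
  proof (intro exI allI impI)
    fix g i assume w: "wt i = wt g"
    show "D (eb g) i = sv_br (cc (- \<delta>) 0) (eb g) i"
    proof (cases g)
      case (Lb m)
      then show ?thesis using w alp'[of m] LL1b par1
        by (cases i) (auto simp: FR cc_car \<alpha>_def)
    next
      case (Gb r)
      then show ?thesis using w bet'[of r] par2 par3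
        by (cases i) (auto simp: FR cc_car \<beta>_def)
    next
      case Cb
      then show ?thesis using w C1 C2 par4
        by (cases i) (auto simp: FR cc_car)
    qed
  qed
qed


lemma B2_odd:
  assumes D: "sv_derivation True D"
  shows "\<exists>m. \<forall>g i. wt i = wt g \<longrightarrow> D (eb g) i = sv_br (cc 0 m) (eb g) i"
proof -
  note dc = der_car[OF D]
  define \<alpha> where "\<alpha> m = D (eb (Lb m)) (Gb m)" for m
  define \<beta> where "\<beta> r = D (eb (Gb r)) (Lb r)" for r
  have par1: "D (eb (Lb m)) (Lb n) = 0" for m n using der_par[OF D, of "Lb m" "Lb n"] by auto
  have par1c: "D (eb (Lb m)) Cb = 0" for m using der_par[OF D, of "Lb m" "Cb"] by auto
  have par2: "D (eb (Gb m)) (Gb n) = 0" for m n using der_par[OF D, of "Gb m" "Gb n"] by auto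
  have par4: "D (eb Cb) (Lb n) = 0" for n using der_par[OF D, of "Cb" "Lb n"] by auto
  have par4c: "D (eb Cb) Cb = 0" using der_par[OF D, of "Cb" "Cb"] by auto
  have LG: "(of_int m / 2 - of_int r) * \<beta> (m + r) = 2 * \<alpha> m + (of_int m - of_int r) * \<beta> r" for m r
    using leib[OF D, of "Lb m" "Gb r" "Lb (m + r)"] by (simp add: FR dc sg_def \<alpha>_def \<beta>_def algebra_simps)
  have LC: "3 / 2 * D (eb (Gb 0)) Cb = \<alpha> 1 / 4"
    using leib[OF D, of "Lb 1" "Gb (-1)" "Cb"] by (simp add: FR dc sg_def \<alpha>_def \<beta>_def)
  have GG0: "2 * \<alpha> 0 - D (eb Cb) (Gb 0) / 12 = 0"
    using leib[OF D, of "Gb 0" "Gb 0" "Gb 0"] by (simp add: FR dc sg_def \<alpha>_def \<beta>_def)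
  have a0: "\<alpha> 0 = 0" using LG[of 0 1] by simp
  have r0: "(of_int m / 2) * \<beta> m = 2 * \<alpha> m + of_int m * \<beta> 0" for m using LG[of m 0] by simp
  have rm: "(3 * of_int m / 2) * \<beta> 0 = 2 * \<alpha> m + 2 * of_int m * \<beta> (- m)" for m
    using LG[of m "- m"] by (simp add: algebra_simps)
  have e5: "5 * \<beta> 0 = \<beta> m + 4 * \<beta> (- m)" if "m \<noteq> 0" for m
  proof -
    have "of_int m * (5 * \<beta> 0 - \<beta> m - 4 * \<beta> (- m)) = 0"
      using r0[of m] rm[of m] by algebra
    then have "5 * \<beta> 0 - \<beta> m - 4 * \<beta> (- m) = 0" using that by simp
    then show ?thesis by algebra
  qed
  have bc: "\<beta> m = \<beta> 0" for m
  proof (cases "m = 0")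
    case False
    then show ?thesis using e5[of m] e5[of "- m"] by simp
  qed simp
  define \<mu> where "\<mu> = \<beta> 0 / 2"
  have al: "\<alpha> m = \<mu> * (of_int m * 3 / 2 - of_int m * 2)" for m
    using r0[of m] bc[of m] unfolding \<mu>_def by algebra
  have be: "\<beta> m = 2 * \<mu>" for m using bc[of m] unfolding \<mu>_def by simp
  have a1: "\<alpha> 1 = - \<mu> / 2" using al[of 1] by simp
  have rho: "D (eb (Gb 0)) Cb = \<mu> * (- 1 / 12)" using LC a1 by algebra
  have C0: "D (eb Cb) (Gb 0) = 0" using GG0 a0 by simp
  show ?thesis
  proof (intro exI allI impI)
    fix g i assume w: "wt i = wt g"
    show "D (eb g) i = sv_br (cc 0 \<mu>) (eb g) i"
    proof (cases g)
      case (Lb m)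
      then show ?thesis using w al[of m] par1 par1c
        by (cases i) (auto simp: FR cc_car \<alpha>_def)
    next
      case (Gb r)
      then show ?thesis using w be[of r] par2 rho
        by (cases i) (auto simp: FR cc_car \<beta>_def)
    next
      case Cb
      then show ?thesis using w C0 par4 par4c
        by (cases i) (auto simp: FR cc_car)
    qed
  qed
qed

lemma der_inner:
  assumes D: "sv_derivation p D"
  shows "\<exists>a\<in>sv_carrier. \<forall>x\<in>sv_carrier. D x = sv_br a x"
proof -
  have "\<exists>l m. \<forall>g i. wt i = wt g \<longrightarrow> D (eb g) i = sv_br (cc l m) (eb g) i"
  proof (cases p)
    case True
    then have "sv_derivation True D" using D by simp
    then obtain m where "\<forall>g i. wt i = wt g \<longrightarrow> D (eb g) i = sv_br (cc 0 m) (eb g) i" using B2_odd by blast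
    then show ?thesis by blast
  next
    case False
    then have "sv_derivation False D" using D by simp
    then obtain l where "\<forall>g i. wt i = wt g \<longrightarrow> D (eb g) i = sv_br (cc l 0) (eb g) i" using B2_even by blast
    then show ?thesis by blast
  qed
  then obtain l m where lm: "\<And>g i. wt i = wt g \<Longrightarrow> D (eb g) i = sv_br (cc l m) (eb g) i"
    by blast
  define b where "b = bdiv (D (eb (Lb 0)))"
  have bc: "b \<in> sv_carrier" unfolding b_def by (rule bdiv_car[OF der_car[OF D]])
  define a where "a = (\<lambda>k. b k + cc l m k)"
  have ac: "a \<in> sv_carrier" unfolding a_def by (rule carrier_add[OF bc cc_car])
  have basis: "D (eb g) = sv_br a (eb g)" for g
  proof
    fix i
    have "sv_br a (eb g) i = sv_br b (eb g) i + sv_br (cc l m) (eb g) i"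
      unfolding a_def br_add_left[OF bc cc_car] by simp
    moreover have "D (eb g) i = sv_br b (eb g) i + sv_br (cc l m) (eb g) i"
    proof (cases "wt i = wt g")
      case True
      then have "sv_br b (eb g) i = 0" unfolding b_def by (rule bdiv_br0[OF der_car[OF D]])
      then show ?thesis using lm[OF True] by simp
    next
      case False
      then have "sv_br (cc l m) (eb g) i = 0" by (rule cc_br0)
      then show ?thesis using B1[OF D False] unfolding b_def by simp
    qed
    ultimately show "D (eb g) i = sv_br a (eb g) i" by simp
  qed
  show ?thesis
  proof (rule bexI[OF _ ac], rule ballI)
    fix x assume "x \<in> sv_carrier"
    then show "D x = sv_br a x" by (rule agree_on_basis[OF der_lin[OF D] br_linear basis])
  qed
qed

lemma Der_inner:
  assumes "sv_Der D"
  shows "\<exists>a\<in>sv_carrier. \<forall>x\<in>sv_carrier. D x = sv_br a x"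
proof -
  obtain D0 D1 where d: "sv_derivation False D0" "sv_derivation True D1"
    "\<And>x. x \<in> sv_carrier \<Longrightarrow> D x = (\<lambda>k. D0 x k + D1 x k)"
    using assms unfolding sv_Der_def by blast
  obtain a0 where a0: "a0 \<in> sv_carrier" "\<And>x. x \<in> sv_carrier \<Longrightarrow> D0 x = sv_br a0 x" using der_inner[OF d(1)] by blast
  obtain a1 where a1: "a1 \<in> sv_carrier" "\<And>x. x \<in> sv_carrier \<Longrightarrow> D1 x = sv_br a1 x" using der_inner[OF d(2)] by blast
  show ?thesis
  proof (intro bexI ballI)
    fix x assume x: "x \<in> sv_carrier"
    show "D x = sv_br (\<lambda>k. a0 k + a1 k) x"
      unfolding br_add_left[OF a0(1) a1(1)] d(3)[OF x] a0(2)[OF x] a1(2)[OF x] ..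
  qed (rule carrier_add[OF a0(1) a1(1)])
qed


lemma two_powi_inj:
  assumes "(2::complex) powi k = 2 powi k0"
  shows "k = k0"
proof (rule ccontr)
  assume ne: "k \<noteq> k0"
  have e: "(2::complex) powi n = of_real ((2::real) powi n)" for n by simp
  from assms have "(2::real) powi k = 2 powi k0" unfolding e of_real_eq_iff .
  moreover have "(2::real) powi k \<noteq> 2 powi k0"
    using ne power_int_strict_increasing[of k k0 "2::real"] power_int_strict_increasing[of k0 k "2::real"]
    by (cases "k < k0") auto
  ultimately show False by simp
qed

locale subsp =
  fixes V :: "(sv_idx \<Rightarrow> complex) set"
  assumes add: "\<And>u v. u \<in> V \<Longrightarrow> v \<in> V \<Longrightarrow> (\<lambda>i. u i + v i) \<in> V"
    and scl: "\<And>c u. u \<in> V \<Longrightarrow> (\<lambda>i. c * u i) \<in> V"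
    and zero: "(\<lambda>i. 0) \<in> V"
begin

lemma diff: "u \<in> V \<Longrightarrow> v \<in> V \<Longrightarrow> (\<lambda>i. u i - v i) \<in> V"
  using add[of u "\<lambda>i. (-1) * v i"] scl[of v "-1"] by simp

lemma sumV: "finite S \<Longrightarrow> (\<And>k. k \<in> S \<Longrightarrow> u k \<in> V) \<Longrightarrow> (\<lambda>i. \<Sum>k\<in>S. u k i) \<in> V"
proof (induction S rule: finite_induct)
  case empty then show ?case using zero by simp
next
  case (insert x F)
  then show ?case using add[of "u x" "\<lambda>i. \<Sum>k\<in>F. u k i"] by simp
qed

lemma vander:
  assumes "finite K"
  shows "(\<And>t. t \<noteq> 0 \<Longrightarrow> (\<lambda>i. \<Sum>k\<in>K. t powi k * v k i) \<in> V) \<Longrightarrow> k \<in> K \<Longrightarrow> v k \<in> V"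
  using assms
proof (induction K arbitrary: v k rule: finite_induct)
  case empty then show ?case by simp
next
  case (insert k0 K)
  define v' where "v' k = (\<lambda>i. ((2::complex) powi k - 2 powi k0) * v k i)" for k
  have Q: "(\<lambda>i. \<Sum>k\<in>K. t powi k * v' k i) \<in> V" if t: "t \<noteq> 0" for t
  proof -
    have t2: "2 * t \<noteq> 0" using t by simp
    have P2: "(\<lambda>i. \<Sum>k\<in>insert k0 K. (2 * t) powi k * v k i) \<in> V" by (rule insert(4)[OF t2])
    have P1: "(\<lambda>i. 2 powi k0 * (\<Sum>k\<in>insert k0 K. t powi k * v k i)) \<in> V"
      using scl insert(4)[OF t] by blast
    have "(\<lambda>i. (\<Sum>k\<in>insert k0 K. (2 * t) powi k * v k i) - 2 powi k0 * (\<Sum>k\<in>insert k0 K. t powi k * v k i))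
        = (\<lambda>i. \<Sum>k\<in>K. t powi k * v' k i)"
    proof
      fix i
      have "(\<Sum>k\<in>insert k0 K. (2 * t) powi k * v k i) - 2 powi k0 * (\<Sum>k\<in>insert k0 K. t powi k * v k i)
          = (\<Sum>k\<in>K. (2 * t) powi k * v k i) - 2 powi k0 * (\<Sum>k\<in>K. t powi k * v k i)"
        using insert(1,2) by (simp add: power_int_mult_distrib algebra_simps)
      also have "\<dots> = (\<Sum>k\<in>K. t powi k * v' k i)"
        by (simp add: v'_def power_int_mult_distrib sum_distrib_left sum_subtractf[symmetric] algebra_simps)
      finally show "(\<Sum>k\<in>insert k0 K. (2 * t) powi k * v k i) - 2 powi k0 * (\<Sum>k\<in>insert k0 K. t powi k * v k i)
          = (\<Sum>k\<in>K. t powi k * v' k i)" .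
    qed
    then show ?thesis using diff[OF P2 P1] by simp
  qed
  have IH: "v' k \<in> V" if "k \<in> K" for k
    using insert(3)[of v' k] Q that insert(1) by blast
  have vk: "v k \<in> V" if kK: "k \<in> K" for k
  proof -
    have ne: "(2::complex) powi k - 2 powi k0 \<noteq> 0" using two_powi_inj kK insert(2) by force
    have "(\<lambda>i. inverse ((2::complex) powi k - 2 powi k0) * v' k i) \<in> V" using scl IH[OF kK] by blast
    moreover have "(\<lambda>i. inverse ((2::complex) powi k - 2 powi k0) * v' k i) = v k"
      using ne by (simp add: v'_def fun_eq_iff)
    ultimately show ?thesis by simp
  qed
  show ?case
  proof (cases "k = k0")
    case False then show ?thesis using vk insert(5) by simp
  next
    case True
    have P: "(\<lambda>i. \<Sum>k\<in>insert k0 K. 1 powi k * v k i) \<in> V" using insert(4)[of 1] by simp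
    have S: "(\<lambda>i. \<Sum>k\<in>K. v k i) \<in> V" using sumV[OF insert(1)] vk by blast
    have "v k0 = (\<lambda>i. (\<Sum>k\<in>insert k0 K. 1 powi k * v k i) - (\<Sum>k\<in>K. v k i))"
      using insert(1,2) by (simp add: fun_eq_iff)
    then show ?thesis using diff[OF P S] True by simp
  qed
qed

end

definition Vsp :: "(sv_idx \<Rightarrow> complex) \<Rightarrow> (sv_idx \<Rightarrow> complex) set" where
  "Vsp x = {sv_br a x | a. a \<in> sv_carrier}"

lemma Vsp_subsp: "subsp (Vsp x)"
proof
  fix u v assume "u \<in> Vsp x" "v \<in> Vsp x"
  then obtain a b where ab: "a \<in> sv_carrier" "b \<in> sv_carrier" "u = sv_br a x" "v = sv_br b x"
    by (auto simp: Vsp_def)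
  have "(\<lambda>i. u i + v i) = sv_br (\<lambda>k. a k + b k) x"
    using ab br_add_left[OF ab(1,2)] by simp
  then show "(\<lambda>i. u i + v i) \<in> Vsp x"
    unfolding Vsp_def using carrier_add[OF ab(1,2)] by blast
next
  fix c u assume "u \<in> Vsp x"
  then obtain a where ab: "a \<in> sv_carrier" "u = sv_br a x" by (auto simp: Vsp_def)
  have "(\<lambda>i. c * u i) = sv_br (\<lambda>k. c * a k) x"
    using ab br_scale_left[of c a x] by simp
  then show "(\<lambda>i. c * u i) \<in> Vsp x"
    unfolding Vsp_def using carrier_scale[OF ab(1)] by blast
next
  have "sv_br (\<lambda>k. 0) x = (\<lambda>i. 0)" by (simp add: sv_br_def)
  then show "(\<lambda>i. 0) \<in> Vsp x" unfolding Vsp_def mem_Collect_eq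
    by (intro exI[where x="\<lambda>k. 0"] conjI) simp_all
qed

definition phi :: "complex \<Rightarrow> (sv_idx \<Rightarrow> complex) \<Rightarrow> sv_idx \<Rightarrow> complex" where
  "phi t x = (\<lambda>i. t powi wt i * x i)"

lemma phi_supp: "supp (phi t x) \<subseteq> supp x" by (auto simp: phi_def supp_def)

lemma phi_car: "x \<in> sv_carrier \<Longrightarrow> phi t x \<in> sv_carrier"
  by (meson phi_supp carrier_iff finite_subset)

lemma phi_inv: "t \<noteq> 0 \<Longrightarrow> phi (1 / t) (phi t x) = x"
  by (simp add: phi_def fun_eq_iff power_int_divide_distrib)

lemma phi_br:
  assumes t: "t \<noteq> 0" and a: "a \<in> sv_carrier" and x: "x \<in> sv_carrier"
  shows "sv_br (phi t a) (phi t x) = phi t (sv_br a x)"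
proof
  fix k
  have fa: "finite (supp a)" and fx: "finite (supp x)" using a x carrier_iff by auto
  have "sv_br (phi t a) (phi t x) k = (\<Sum>i\<in>supp a. \<Sum>j\<in>supp x. phi t a i * phi t x j * sv_bb i j k)"
    by (rule sv_br_sets[OF fa fx phi_supp phi_supp])
  also have "\<dots> = (\<Sum>i\<in>supp a. \<Sum>j\<in>supp x. t powi wt k * (a i * x j * sv_bb i j k))"
  proof (intro sum.cong refl)
    fix i j
    show "phi t a i * phi t x j * sv_bb i j k = t powi wt k * (a i * x j * sv_bb i j k)"
    proof (cases "sv_bb i j k = 0")
      case False
      then have "wt k = wt i + wt j" by (rule bb_wt)
      then show ?thesis using t by (simp add: phi_def power_int_add algebra_simps)
    qed simp
  qed
  also have "\<dots> = phi t (sv_br a x) k"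
    by (simp add: phi_def sv_br_sets[OF fa fx order_refl order_refl] sum_distrib_left)
  finally show "sv_br (phi t a) (phi t x) k = phi t (sv_br a x) k" .
qed

definition gc :: "int \<Rightarrow> (sv_idx \<Rightarrow> complex) \<Rightarrow> int \<Rightarrow> sv_idx \<Rightarrow> complex" where
  "gc k y w = (\<lambda>i. if wt i = w + k then y i else 0)"

lemma grading:
  fixes Psi :: "(sv_idx \<Rightarrow> complex) \<Rightarrow> sv_idx \<Rightarrow> complex"
  assumes lin2: "\<And>s1 s2. Psi (\<lambda>i. s1 * eb f i + s2 * eb F i) = (\<lambda>i. s1 * Psi (eb f) i + s2 * Psi (eb F) i)"
    and loc: "\<And>s1 s2. \<exists>a\<in>sv_carrier. Psi (\<lambda>i. s1 * eb f i + s2 * eb F i) = sv_br a (\<lambda>i. s1 * eb f i + s2 * eb F i)"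
    and cf: "Psi (eb f) \<in> sv_carrier" and cF: "Psi (eb F) \<in> sv_carrier"
  shows "(\<lambda>i. gc k (Psi (eb f)) (wt f) i + gc k (Psi (eb F)) (wt F) i) \<in> Vsp (\<lambda>i. eb f i + eb F i)"
proof -
  interpret subsp "Vsp (\<lambda>i. eb f i + eb F i)" by (rule Vsp_subsp)
  let ?x = "\<lambda>i. eb f i + eb F i"
  let ?yf = "Psi (eb f)" and ?yF = "Psi (eb F)"
  define v where "v k = (\<lambda>i. gc k ?yf (wt f) i + gc k ?yF (wt F) i)" for k
  define K where "K = (\<lambda>i. wt i - wt f) ` supp ?yf \<union> (\<lambda>i. wt i - wt F) ` supp ?yF"
  have fK: "finite K" using cf cF carrier_iff unfolding K_def by auto
  have Pt: "(\<lambda>i. \<Sum>k\<in>K. t powi (- k) * v k i) \<in> Vsp ?x" if t: "t \<noteq> 0" for t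
  proof -
    have xc: "?x \<in> sv_carrier" by (intro carrier_add eb_carrier)
    have px: "phi t ?x = (\<lambda>i. t powi wt f * eb f i + t powi wt F * eb F i)"
      by (auto simp: phi_def eb_def fun_eq_iff)
    obtain c where c: "c \<in> sv_carrier" "Psi (phi t ?x) = sv_br c (phi t ?x)"
      using loc px by metis
    have "phi (1 / t) (Psi (phi t ?x)) = sv_br (phi (1 / t) c) ?x"
      using c(2) phi_br[of "1 / t" c "phi t ?x"] t phi_inv[OF t] c(1) phi_car[OF xc]
      by simp
    moreover have "phi (1 / t) (Psi (phi t ?x)) = (\<lambda>i. \<Sum>k\<in>K. t powi (- k) * v k i)"
    proof
      fix i
      have "phi (1 / t) (Psi (phi t ?x)) i = t powi (wt f - wt i) * ?yf i + t powi (wt F - wt i) * ?yF i"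
        unfolding px lin2 using t
        by (simp add: phi_def power_int_divide_distrib power_int_diff field_simps)
      also have "\<dots> = (\<Sum>k\<in>K. t powi (- k) * v k i)"
      proof -
        have s1: "(\<Sum>k\<in>K. t powi (- k) * gc k ?yf (wt f) i) = t powi (wt f - wt i) * ?yf i"
        proof -
          have "(\<Sum>k\<in>K. t powi (- k) * gc k ?yf (wt f) i) = (\<Sum>k\<in>K. if k = wt i - wt f then t powi (- k) * ?yf i else 0)"
            by (intro sum.cong refl) (auto simp: gc_def)
          also have "\<dots> = (if wt i - wt f \<in> K then t powi (wt f - wt i) * ?yf i else 0)"
            using fK by (simp add: sum.delta')
          also have "\<dots> = t powi (wt f - wt i) * ?yf i"
            by (auto simp: K_def supp_def)
          finally show ?thesis .
        qed
        have s2: "(\<Sum>k\<in>K. t powi (- k) * gc k ?yF (wt F) i) = t powi (wt F - wt i) * ?yF i"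
        proof -
          have "(\<Sum>k\<in>K. t powi (- k) * gc k ?yF (wt F) i) = (\<Sum>k\<in>K. if k = wt i - wt F then t powi (- k) * ?yF i else 0)"
            by (intro sum.cong refl) (auto simp: gc_def)
          also have "\<dots> = (if wt i - wt F \<in> K then t powi (wt F - wt i) * ?yF i else 0)"
            using fK by (simp add: sum.delta')
          also have "\<dots> = t powi (wt F - wt i) * ?yF i"
            by (auto simp: K_def supp_def)
          finally show ?thesis .
        qed
        show ?thesis using s1 s2 by (simp add: v_def distrib_left sum.distrib)
      qed
      finally show "phi (1 / t) (Psi (phi t ?x)) i = (\<Sum>k\<in>K. t powi (- k) * v k i)" .
    qed
    ultimately show ?thesis using phi_car[OF c(1)] unfolding Vsp_def by auto
  qed
  show ?thesis
  proof (cases "k \<in> K")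
    case True
    have fK': "finite (uminus ` K)" using fK by simp
    have "(\<lambda>i. \<Sum>k\<in>uminus ` K. t powi k * v (- k) i) \<in> Vsp ?x" if "t \<noteq> 0" for t
    proof -
      have "(\<lambda>i. \<Sum>k\<in>uminus ` K. t powi k * v (- k) i) = (\<lambda>i. \<Sum>k\<in>K. t powi (- k) * v k i)"
        by (subst sum.reindex) (auto intro: inj_onI)
      then show ?thesis using Pt[OF that] by simp
    qed
    then have "v (- (- k)) \<in> Vsp ?x" using vander[OF fK', of "\<lambda>k. v (- k)" "- k"] True by auto
    then show ?thesis by (simp add: v_def)
  next
    case False
    have g1: "gc k ?yf (wt f) i = 0" for i
    proof (cases "?yf i = 0")
      case False
      then have "wt i - wt f \<in> K" unfolding K_def supp_def by blast
      then show ?thesis using \<open>k \<notin> K\<close> by (auto simp: gc_def)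
    qed (simp add: gc_def)
    have g2: "gc k ?yF (wt F) i = 0" for i
    proof (cases "?yF i = 0")
      case False
      then have "wt i - wt F \<in> K" unfolding K_def supp_def by blast
      then show ?thesis using \<open>k \<notin> K\<close> by (auto simp: gc_def)
    qed (simp add: gc_def)
    have "v k = (\<lambda>i. 0)" using g1 g2 by (simp add: v_def)
    then show ?thesis using zero by (simp add: v_def)
  qed
qed


lemma chain:
  fixes bb c d :: "int \<Rightarrow> complex"
  assumes fin: "finite {j. bb j \<noteq> 0}"
    and eq: "\<And>j. c j * bb j + d j * bb (j - 1) = (if j = 0 then r0 else if j = 1 then r1 else 0)"
    and dn: "\<forall>j\<ge>2. d j \<noteq> 0" and cn: "\<forall>j\<le>-1. c j \<noteq> 0"
  shows chain_zero: "\<And>j. j \<noteq> 0 \<Longrightarrow> bb j = 0" and chain_r0: "r0 = c 0 * bb 0" and chain_r1: "r1 = d 1 * bb 0"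
proof -
  define S where "S = {j. bb j \<noteq> 0}"
  define N where "N = (if S = {} then 0 else Max (abs ` S))"
  have N0: "N \<ge> 0" unfolding N_def using fin S_def
    by (auto intro: order_trans[OF abs_ge_zero Max_ge])
  have bnd: "bb j = 0" if "\<bar>j\<bar> > N" for j
  proof (rule ccontr)
    assume "bb j \<noteq> 0"
    then have "j \<in> S" by (simp add: S_def)
    then have "\<bar>j\<bar> \<le> N" unfolding N_def using fin S_def by (auto intro: Max_ge)
    then show False using that by simp
  qed
  have up: "N + 1 - int n \<ge> 1 \<Longrightarrow> bb (N + 1 - int n) = 0" for n
  proof (induction n)
    case 0 then show ?case using bnd[of "N + 1"] N0 by simp
  next
    case (Suc n)
    let ?j = "N + 1 - int (Suc n)"
    have e1: "?j + 1 = N + 1 - int n" by simp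
    have IH: "bb (?j + 1) = 0" unfolding e1 using Suc by simp
    have "c (?j + 1) * bb (?j + 1) + d (?j + 1) * bb (?j + 1 - 1) = 0"
      using eq[of "?j + 1"] Suc.prems by (simp split: if_splits)
    then have "d (?j + 1) * bb ?j = 0" using IH by simp
    moreover have "d (?j + 1) \<noteq> 0" using dn Suc.prems by simp
    ultimately show ?case by simp
  qed
  have lo: "- (N + 1) + int n \<le> -1 \<Longrightarrow> bb (- (N + 1) + int n) = 0" for n
  proof (induction n)
    case 0 then show ?case using bnd[of "- (N + 1)"] N0 by simp
  next
    case (Suc n)
    let ?j = "- (N + 1) + int (Suc n)"
    have e1: "?j - 1 = - (N + 1) + int n" by simp
    have IH: "bb (?j - 1) = 0" unfolding e1 using Suc by simp
    have "c ?j * bb ?j + d ?j * bb (?j - 1) = 0"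
      using eq[of "?j"] Suc.prems by (simp split: if_splits)
    then have "c ?j * bb ?j = 0" using IH by simp
    moreover have "c ?j \<noteq> 0" using cn Suc.prems by simp
    ultimately show ?case by simp
  qed
  show z: "bb j = 0" if "j \<noteq> 0" for j
  proof (cases "\<bar>j\<bar> > N")
    case True then show ?thesis by (rule bnd)
  next
    case False
    show ?thesis
    proof (cases "j \<ge> 1")
      case True
      then show ?thesis using up[of "nat (N + 1 - j)"] False by simp
    next
      case False2: False
      then have "j \<le> -1" using that by simp
      then show ?thesis using lo[of "nat (j + N + 1)"] False by simp
    qed
  qed
  show "r0 = c 0 * bb 0" using eq[of 0] z[of "-1"] by simp
  show "r1 = d 1 * bb 0" using eq[of 1] z[of 1] by simp
qed

lemma fin_chain:
  assumes a: "a \<in> sv_carrier" and X: "inj X" and D: "D \<noteq> (0::int)"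
  shows "finite {j. a (X (k + j * D)) \<noteq> 0}"
proof -
  have "{j. a (X (k + j * D)) \<noteq> 0} = (\<lambda>j. X (k + j * D)) -` supp a" by (auto simp: supp_def)
  moreover have "inj (\<lambda>j. X (k + j * D))"
  proof (rule injI)
    fix x y assume "X (k + x * D) = X (k + y * D)"
    then have "k + x * D = k + y * D" by (rule injD[OF X])
    then show "x = y" using D by simp
  qed
  then have "finite ((\<lambda>j. X (k + j * D)) -` supp a)"
    using a by (intro finite_vimageI) (simp_all add: carrier_iff)
  ultimately show ?thesis by simp
qed

lemma inj_Lb: "inj Lb" by (simp add: inj_def)
lemma inj_Gb: "inj Gb" by (simp add: inj_def)

lemma hom_at:
  assumes h: "\<And>i. y i \<noteq> 0 \<Longrightarrow> wt i = v" and ne: "wt i \<noteq> v"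
  shows "y i = 0"
  using h ne by blast

lemma LL_L:
  assumes a: "a \<in> sv_carrier"
  and E: "\<And>i. y1 i + y2 i = sv_br a (eb (Lb w)) i + sv_br a (eb (Lb W)) i"
  and h1: "\<And>i. y1 i \<noteq> 0 \<Longrightarrow> wt i = w + k" and h2: "\<And>i. y2 i \<noteq> 0 \<Longrightarrow> wt i = W + k"
  and D: "w < W"
  and dn: "\<And>j. j \<ge> 2 \<Longrightarrow> k - w + (j - 2) * (W - w) \<noteq> 0"
  and cn: "\<And>j. j \<le> -1 \<Longrightarrow> k - w + j * (W - w) \<noteq> 0"
  shows "\<And>j. j \<noteq> 0 \<Longrightarrow> a (Lb (k + j * (W - w))) = 0"
    and "y1 (Lb (w + k)) = of_int (k - w) * a (Lb k)"
    and "y2 (Lb (W + k)) = of_int (k - W) * a (Lb k)"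
proof -
  define \<beta> where "\<beta> j = a (Lb (k + j * (W - w)))" for j
  define c where "c j = (of_int (k - w + j * (W - w)) :: complex)" for j
  define d where "d j = (of_int (k - w + (j - 2) * (W - w)) :: complex)" for j
  have fin: "finite {j. \<beta> j \<noteq> 0}" unfolding \<beta>_def using fin_chain[OF a inj_Lb] D by simp
  have eq: "c j * \<beta> j + d j * \<beta> (j - 1) = (if j = 0 then y1 (Lb (w + k)) else if j = 1 then y2 (Lb (W + k)) else 0)" for j
  proof -
    let ?z = "w + k + j * (W - w)"
    have e: "y1 (Lb ?z) + y2 (Lb ?z) = a (Lb (?z - w)) * of_int (?z - 2 * w) + a (Lb (?z - W)) * of_int (?z - 2 * W)"
      using E[of "Lb ?z"] by (simp add: R1[OF a])
    have i1: "?z - w = k + j * (W - w)" by simp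
    have i2: "?z - W = k + (j - 1) * (W - w)" by (simp add: algebra_simps)
    have i3: "?z - 2 * w = k - w + j * (W - w)" by simp
    have i4: "?z - 2 * W = k - w + (j - 2) * (W - w)" by (simp add: algebra_simps)
    have y1z: "y1 (Lb ?z) = (if j = 0 then y1 (Lb (w + k)) else 0)"
    proof (cases "j = 0")
      case False then show ?thesis using hom_at[OF h1, where i="Lb ?z"] D by simp
    qed simp
    have y2z: "y2 (Lb ?z) = (if j = 1 then y2 (Lb (W + k)) else 0)"
    proof (cases "j = 1")
      case False
      have "(j - 1) * (W - w) \<noteq> 0" using False D by simp
      moreover have "(j - 1) * (W - w) = j * (W - w) - (W - w)" by (simp add: left_diff_distrib)
      ultimately have "j * (W - w) \<noteq> W - w" by linarith
      then have "wt (Lb ?z) \<noteq> W + k" unfolding wt.simps by linarith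
      then show ?thesis using hom_at[OF h2, where i="Lb ?z"] False by simp
    qed (simp add: add.commute)
    show ?thesis using e y1z y2z unfolding i1 i2 i3 i4 \<beta>_def c_def d_def
      by (auto simp: algebra_simps)
  qed
  have dn': "\<forall>j\<ge>2. d j \<noteq> 0" unfolding d_def of_int_eq_0_iff using dn by blast
  have cn': "\<forall>j\<le>-1. c j \<noteq> 0" unfolding c_def of_int_eq_0_iff using cn by blast
  note ch = chain[where bb=\<beta> and c=c and d=d, OF fin eq dn' cn']
  show "a (Lb (k + j * (W - w))) = 0" if "j \<noteq> 0" for j using ch(1)[OF that] unfolding \<beta>_def .
  show "y1 (Lb (w + k)) = of_int (k - w) * a (Lb k)" using ch(2) unfolding c_def \<beta>_def by simp
  show "y2 (Lb (W + k)) = of_int (k - W) * a (Lb k)" using ch(3) unfolding d_def \<beta>_def by (simp add: algebra_simps)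
qed


lemma LL_G:
  assumes a: "a \<in> sv_carrier"
  and E: "\<And>i. y1 i + y2 i = sv_br a (eb (Lb w)) i + sv_br a (eb (Lb W)) i"
  and h1: "\<And>i. y1 i \<noteq> 0 \<Longrightarrow> wt i = w + k" and h2: "\<And>i. y2 i \<noteq> 0 \<Longrightarrow> wt i = W + k"
  and D: "w < W"
  and dn: "\<And>j. j \<ge> 2 \<Longrightarrow> 2 * k - w + (2 * j - 3) * (W - w) \<noteq> 0"
  and cn: "\<And>j. j \<le> -1 \<Longrightarrow> 2 * k - w + 2 * j * (W - w) \<noteq> 0"
  shows "\<And>j. j \<noteq> 0 \<Longrightarrow> a (Gb (k + j * (W - w))) = 0"
    and "y1 (Gb (w + k)) = of_int (2 * k - w) / 2 * a (Gb k)"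
    and "y2 (Gb (W + k)) = of_int (2 * k - W) / 2 * a (Gb k)"
proof -
  define \<beta> where "\<beta> j = a (Gb (k + j * (W - w)))" for j
  define c where "c j = (of_int (2 * k - w + 2 * j * (W - w)) / 2 :: complex)" for j
  define d where "d j = (of_int (2 * k - w + (2 * j - 3) * (W - w)) / 2 :: complex)" for j
  have fin: "finite {j. \<beta> j \<noteq> 0}" unfolding \<beta>_def using fin_chain[OF a inj_Gb] D by simp
  have eq: "c j * \<beta> j + d j * \<beta> (j - 1) = (if j = 0 then y1 (Gb (w + k)) else if j = 1 then y2 (Gb (W + k)) else 0)" for j
  proof -
    let ?z = "w + k + j * (W - w)"
    have e: "y1 (Gb ?z) + y2 (Gb ?z) = a (Gb (?z - w)) * (of_int ?z - 3/2 * of_int w) + a (Gb (?z - W)) * (of_int ?z - 3/2 * of_int W)"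
      using E[of "Gb ?z"] by (simp add: R2[OF a])
    have i1: "?z - w = k + j * (W - w)" by simp
    have i2: "?z - W = k + (j - 1) * (W - w)" by (simp add: algebra_simps)
    have i3: "(of_int ?z - 3/2 * of_int w :: complex) = c j" unfolding c_def by (simp add: field_simps)
    have i4: "(of_int ?z - 3/2 * of_int W :: complex) = d j" unfolding d_def by (simp add: field_simps)
    have y1z: "y1 (Gb ?z) = (if j = 0 then y1 (Gb (w + k)) else 0)"
    proof (cases "j = 0")
      case False then show ?thesis using hom_at[OF h1, where i="Gb ?z"] D by simp
    qed simp
    have y2z: "y2 (Gb ?z) = (if j = 1 then y2 (Gb (W + k)) else 0)"
    proof (cases "j = 1")
      case False
      have "(j - 1) * (W - w) \<noteq> 0" using False D by simp
      moreover have "(j - 1) * (W - w) = j * (W - w) - (W - w)" by (simp add: left_diff_distrib)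
      ultimately have "j * (W - w) \<noteq> W - w" by linarith
      then have "wt (Gb ?z) \<noteq> W + k" unfolding wt.simps by linarith
      then show ?thesis using hom_at[OF h2, where i="Gb ?z"] False by simp
    qed (simp add: add.commute)
    show ?thesis using e y1z y2z unfolding i1 i2 i3 i4 \<beta>_def
      by (auto simp: algebra_simps)
  qed
  have dn': "\<forall>j\<ge>2. d j \<noteq> 0" unfolding d_def divide_eq_0_iff of_int_eq_0_iff using dn by simp
  have cn': "\<forall>j\<le>-1. c j \<noteq> 0" unfolding c_def divide_eq_0_iff of_int_eq_0_iff using cn by simp
  note ch = chain[where bb=\<beta> and c=c and d=d, OF fin eq dn' cn']
  show "a (Gb (k + j * (W - w))) = 0" if "j \<noteq> 0" for j using ch(1)[OF that] unfolding \<beta>_def .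
  show "y1 (Gb (w + k)) = of_int (2 * k - w) / 2 * a (Gb k)" using ch(2) unfolding c_def \<beta>_def by simp
  show "y2 (Gb (W + k)) = of_int (2 * k - W) / 2 * a (Gb k)" using ch(3) unfolding d_def \<beta>_def by (simp add: algebra_simps)
qed

lemma GG_L:
  assumes a: "a \<in> sv_carrier"
  and E: "\<And>i. y1 i + y2 i = sv_br a (eb (Gb w)) i + sv_br a (eb (Gb W)) i"
  and h1: "\<And>i. y1 i \<noteq> 0 \<Longrightarrow> wt i = w + k" and h2: "\<And>i. y2 i \<noteq> 0 \<Longrightarrow> wt i = W + k"
  and D: "w < W"
  shows "\<And>j. j \<noteq> 0 \<Longrightarrow> a (Gb (k + j * (W - w))) = 0"
    and "y1 (Lb (w + k)) = 2 * a (Gb k)"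
    and "y2 (Lb (W + k)) = 2 * a (Gb k)"
proof -
  define \<beta> where "\<beta> j = a (Gb (k + j * (W - w)))" for j
  define c where "c j = (2 :: complex)" for j :: int
  define d where "d j = (2 :: complex)" for j :: int
  have fin: "finite {j. \<beta> j \<noteq> 0}" unfolding \<beta>_def using fin_chain[OF a inj_Gb] D by simp
  have eq: "c j * \<beta> j + d j * \<beta> (j - 1) = (if j = 0 then y1 (Lb (w + k)) else if j = 1 then y2 (Lb (W + k)) else 0)" for j
  proof -
    let ?z = "w + k + j * (W - w)"
    have e: "y1 (Lb ?z) + y2 (Lb ?z) = 2 * a (Gb (?z - w)) + 2 * a (Gb (?z - W))"
      using E[of "Lb ?z"] by (simp add: R4[OF a])
    have i1: "?z - w = k + j * (W - w)" by simp
    have i2: "?z - W = k + (j - 1) * (W - w)" by (simp add: algebra_simps)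
    have y1z: "y1 (Lb ?z) = (if j = 0 then y1 (Lb (w + k)) else 0)"
    proof (cases "j = 0")
      case False then show ?thesis using hom_at[OF h1, where i="Lb ?z"] D by simp
    qed simp
    have y2z: "y2 (Lb ?z) = (if j = 1 then y2 (Lb (W + k)) else 0)"
    proof (cases "j = 1")
      case False
      have "(j - 1) * (W - w) \<noteq> 0" using False D by simp
      moreover have "(j - 1) * (W - w) = j * (W - w) - (W - w)" by (simp add: left_diff_distrib)
      ultimately have "j * (W - w) \<noteq> W - w" by linarith
      then have "wt (Lb ?z) \<noteq> W + k" unfolding wt.simps by linarith
      then show ?thesis using hom_at[OF h2, where i="Lb ?z"] False by simp
    qed (simp add: add.commute)
    show ?thesis using e y1z y2z unfolding i1 i2 \<beta>_def c_def d_def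
      by (auto simp: algebra_simps)
  qed
  have dn': "\<forall>j\<ge>2. d j \<noteq> 0" unfolding d_def by simp
  have cn': "\<forall>j\<le>-1. c j \<noteq> 0" unfolding c_def by simp
  note ch = chain[where bb=\<beta> and c=c and d=d, OF fin eq dn' cn']
  show "a (Gb (k + j * (W - w))) = 0" if "j \<noteq> 0" for j using ch(1)[OF that] unfolding \<beta>_def .
  show "y1 (Lb (w + k)) = 2 * a (Gb k)" using ch(2) unfolding c_def \<beta>_def by simp
  show "y2 (Lb (W + k)) = 2 * a (Gb k)" using ch(3) unfolding d_def \<beta>_def by simp
qed

lemma GG_G:
  assumes a: "a \<in> sv_carrier"
  and E: "\<And>i. y1 i + y2 i = sv_br a (eb (Gb w)) i + sv_br a (eb (Gb W)) i"
  and h1: "\<And>i. y1 i \<noteq> 0 \<Longrightarrow> wt i = w + k" and h2: "\<And>i. y2 i \<noteq> 0 \<Longrightarrow> wt i = W + k"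
  and D: "w < W"
  and dn: "\<And>j. j \<ge> 2 \<Longrightarrow> k - 2 * w + (j - 3) * (W - w) \<noteq> 0"
  and cn: "\<And>j. j \<le> -1 \<Longrightarrow> k - 2 * w + j * (W - w) \<noteq> 0"
  shows "\<And>j. j \<noteq> 0 \<Longrightarrow> a (Lb (k + j * (W - w))) = 0"
    and "y1 (Gb (w + k)) = of_int (k - 2 * w) / 2 * a (Lb k)"
    and "y2 (Gb (W + k)) = of_int (k - 2 * W) / 2 * a (Lb k)"
proof -
  define \<beta> where "\<beta> j = a (Lb (k + j * (W - w)))" for j
  define c where "c j = (of_int (k - 2 * w + j * (W - w)) / 2 :: complex)" for j
  define d where "d j = (of_int (k - 2 * w + (j - 3) * (W - w)) / 2 :: complex)" for j
  have fin: "finite {j. \<beta> j \<noteq> 0}" unfolding \<beta>_def using fin_chain[OF a inj_Lb] D by simp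
  have eq: "c j * \<beta> j + d j * \<beta> (j - 1) = (if j = 0 then y1 (Gb (w + k)) else if j = 1 then y2 (Gb (W + k)) else 0)" for j
  proof -
    let ?z = "w + k + j * (W - w)"
    have e: "y1 (Gb ?z) + y2 (Gb ?z) = a (Lb (?z - w)) * ((of_int ?z - of_int w) / 2 - of_int w) + a (Lb (?z - W)) * ((of_int ?z - of_int W) / 2 - of_int W)"
      using E[of "Gb ?z"] by (simp add: R5[OF a])
    have i1: "?z - w = k + j * (W - w)" by simp
    have i2: "?z - W = k + (j - 1) * (W - w)" by (simp add: algebra_simps)
    have i3: "((of_int ?z - of_int w) / 2 - of_int w :: complex) = c j" unfolding c_def by (simp add: field_simps)
    have i4: "((of_int ?z - of_int W) / 2 - of_int W :: complex) = d j" unfolding d_def by (simp add: field_simps)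
    have y1z: "y1 (Gb ?z) = (if j = 0 then y1 (Gb (w + k)) else 0)"
    proof (cases "j = 0")
      case False then show ?thesis using hom_at[OF h1, where i="Gb ?z"] D by simp
    qed simp
    have y2z: "y2 (Gb ?z) = (if j = 1 then y2 (Gb (W + k)) else 0)"
    proof (cases "j = 1")
      case False
      have "(j - 1) * (W - w) \<noteq> 0" using False D by simp
      moreover have "(j - 1) * (W - w) = j * (W - w) - (W - w)" by (simp add: left_diff_distrib)
      ultimately have "j * (W - w) \<noteq> W - w" by linarith
      then have "wt (Gb ?z) \<noteq> W + k" unfolding wt.simps by linarith
      then show ?thesis using hom_at[OF h2, where i="Gb ?z"] False by simp
    qed (simp add: add.commute)
    show ?thesis using e y1z y2z unfolding i1 i2 i3 i4 \<beta>_def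
      by (auto simp: algebra_simps)
  qed
  have dn': "\<forall>j\<ge>2. d j \<noteq> 0" unfolding d_def divide_eq_0_iff of_int_eq_0_iff using dn by simp
  have cn': "\<forall>j\<le>-1. c j \<noteq> 0" unfolding c_def divide_eq_0_iff of_int_eq_0_iff using cn by simp
  note ch = chain[where bb=\<beta> and c=c and d=d, OF fin eq dn' cn']
  show "a (Lb (k + j * (W - w))) = 0" if "j \<noteq> 0" for j using ch(1)[OF that] unfolding \<beta>_def .
  show "y1 (Gb (w + k)) = of_int (k - 2 * w) / 2 * a (Lb k)" using ch(2) unfolding c_def \<beta>_def by simp
  show "y2 (Gb (W + k)) = of_int (k - 2 * W) / 2 * a (Lb k)" using ch(3) unfolding d_def \<beta>_def by (simp add: algebra_simps)
qed


lemma hz1: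
  assumes h1: "\<forall>i. y1 i \<noteq> 0 \<longrightarrow> wt i = w + k" and D: "w < W"
    and wi: "wt i = w + k + j * (W - w)" and j: "j \<noteq> 0"
  shows "y1 i = 0"
proof (rule ccontr)
  assume "y1 i \<noteq> 0"
  then have "wt i = w + k" using h1 by blast
  then have "j * (W - w) = 0" using wi by simp
  then show False using j D by simp
qed

lemma hz2:
  assumes h2: "\<forall>i. y2 i \<noteq> 0 \<longrightarrow> wt i = W + k" and D: "w < W"
    and wi: "wt i = w + k + j * (W - w)" and j: "j \<noteq> 1"
  shows "y2 i = 0"
proof (rule ccontr)
  assume "y2 i \<noteq> 0"
  then have "wt i = W + k" using h2 by blast
  then have "(j - 1) * (W - w) = 0" using wi by (simp add: algebra_simps)
  then show False using j D by simp
qed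

lemma LG_A:
  assumes a: "a \<in> sv_carrier"
  and E: "\<And>i. y1 i + y2 i = sv_br a (eb (Lb w)) i + sv_br a (eb (Gb W)) i"
  and h1: "\<And>i. y1 i \<noteq> 0 \<Longrightarrow> wt i = w + k" and h2: "\<And>i. y2 i \<noteq> 0 \<Longrightarrow> wt i = W + k"
  and D: "w < W"
  and dn: "\<And>j. j \<ge> 2 \<Longrightarrow> k - 2 * w + (j - 3) * (W - w) \<noteq> 0"
  and cn: "\<And>j. j \<le> -1 \<Longrightarrow> k - w + j * (W - w) \<noteq> 0 \<and> 2 * k - w + 2 * j * (W - w) \<noteq> 0"
  shows "y1 (Lb (w + k)) = of_int (k - w) * a (Lb k)"
    and "y2 (Gb (W + k)) = of_int (k - 2 * w - 2 * (W - w)) / 2 * a (Lb k)"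
proof -
  have h1x: "\<forall>i. y1 i \<noteq> 0 \<longrightarrow> wt i = w + k" using h1 by blast
  have h2x: "\<forall>i. y2 i \<noteq> 0 \<longrightarrow> wt i = W + k" using h2 by blast
  define \<beta> where "\<beta> j = (if even j then a (Lb (k + j * (W - w))) else a (Gb (k + j * (W - w))))" for j
  define c where "c j = (if even j then of_int (k - w + j * (W - w)) else of_int (2 * k - w + 2 * j * (W - w)) / 2 :: complex)" for j
  define d where "d j = (if even j then 2 else of_int (k - 2 * w + (j - 3) * (W - w)) / 2 :: complex)" for j
  have fin: "finite {j. \<beta> j \<noteq> 0}"
  proof -
    have "{j. \<beta> j \<noteq> 0} \<subseteq> {j. a (Lb (k + j * (W - w))) \<noteq> 0} \<union> {j. a (Gb (k + j * (W - w))) \<noteq> 0}"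
      by (auto simp: \<beta>_def split: if_splits)
    moreover have "finite ({j. a (Lb (k + j * (W - w))) \<noteq> 0} \<union> {j. a (Gb (k + j * (W - w))) \<noteq> 0})"
      using fin_chain[OF a inj_Lb] fin_chain[OF a inj_Gb] D by simp
    ultimately show ?thesis by (rule finite_subset)
  qed
  have eq: "c j * \<beta> j + d j * \<beta> (j - 1) = (if j = 0 then y1 (Lb (w + k)) else if j = 1 then y2 (Gb (W + k)) else 0)" for j
  proof -
    let ?z = "w + k + j * (W - w)"
    have i1: "?z - w = k + j * (W - w)" by simp
    have i2: "?z - W = k + (j - 1) * (W - w)" by (simp add: algebra_simps)
    show ?thesis
    proof (cases "even j")
      case True
      have e: "y1 (Lb ?z) + y2 (Lb ?z) = a (Lb (?z - w)) * of_int (?z - 2 * w) + 2 * a (Gb (?z - W))"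
        using E[of "Lb ?z"] by (simp add: R1[OF a] R4[OF a])
      have y1z: "y1 (Lb ?z) = (if j = 0 then y1 (Lb (w + k)) else 0)"
        using hz1[OF h1x D, where i="Lb ?z" and j=j] by simp
      have j1: "j \<noteq> 1" using True by (cases "j = 1") simp_all
      have y2z: "y2 (Lb ?z) = 0" using hz2[OF h2x D, where i="Lb ?z" and j=j] j1 by simp
      show ?thesis using e y1z y2z True j1 unfolding i1 i2 \<beta>_def c_def d_def
        by (auto simp: algebra_simps)
    next
      case False
      have e: "y1 (Gb ?z) + y2 (Gb ?z) = a (Gb (?z - w)) * (of_int ?z - 3/2 * of_int w) + a (Lb (?z - W)) * ((of_int ?z - of_int W) / 2 - of_int W)"
        using E[of "Gb ?z"] by (simp add: R2[OF a] R5[OF a])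
      have j0: "j \<noteq> 0" using False by (cases "j = 0") simp_all
      have y1z: "y1 (Gb ?z) = 0" using hz1[OF h1x D, where i="Gb ?z" and j=j] j0 by simp
      have y2z: "y2 (Gb ?z) = (if j = 1 then y2 (Gb (W + k)) else 0)"
        using hz2[OF h2x D, where i="Gb ?z" and j=j] by (auto simp: add.commute)
      have c3: "(of_int ?z - 3/2 * of_int w :: complex) = of_int (2 * k - w + 2 * j * (W - w)) / 2"
        by (simp add: field_simps)
      have c4: "((of_int ?z - of_int W) / 2 - of_int W :: complex) = of_int (k - 2 * w + (j - 3) * (W - w)) / 2"
        by (simp add: field_simps)
      show ?thesis using e y1z y2z False j0 unfolding i1 i2 c3 c4 \<beta>_def c_def d_def
        by (auto simp: algebra_simps)
    qed
  qed
  have dn': "\<forall>j\<ge>2. d j \<noteq> 0"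
  proof (intro allI impI)
    fix j :: int assume j: "j \<ge> 2"
    have "(of_int (k - 2 * w + (j - 3) * (W - w)) :: complex) \<noteq> 0" unfolding of_int_eq_0_iff by (rule dn[OF j])
    then show "d j \<noteq> 0" unfolding d_def by simp
  qed
  have cn': "\<forall>j\<le>-1. c j \<noteq> 0"
  proof (intro allI impI)
    fix j :: int assume j: "j \<le> -1"
    have "(of_int (k - w + j * (W - w)) :: complex) \<noteq> 0" unfolding of_int_eq_0_iff using cn[OF j] by blast
    moreover have "(of_int (2 * k - w + 2 * j * (W - w)) :: complex) \<noteq> 0" unfolding of_int_eq_0_iff using cn[OF j] by blast
    ultimately show "c j \<noteq> 0" unfolding c_def by simp
  qed
  note ch = chain[where bb=\<beta> and c=c and d=d, OF fin eq dn' cn']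
  show "y1 (Lb (w + k)) = of_int (k - w) * a (Lb k)" using ch(2) unfolding c_def \<beta>_def by simp
  show "y2 (Gb (W + k)) = of_int (k - 2 * w - 2 * (W - w)) / 2 * a (Lb k)" using ch(3) unfolding d_def \<beta>_def
    by (simp add: algebra_simps)
qed


lemma LG_B:
  assumes a: "a \<in> sv_carrier"
  and E: "\<And>i. y1 i + y2 i = sv_br a (eb (Lb w)) i + sv_br a (eb (Gb W)) i"
  and h1: "\<And>i. y1 i \<noteq> 0 \<Longrightarrow> wt i = w + k" and h2: "\<And>i. y2 i \<noteq> 0 \<Longrightarrow> wt i = W + k"
  and D: "w < W"
  and dn: "\<And>j. j \<ge> 2 \<Longrightarrow> k - 2 * w + (j - 3) * (W - w) \<noteq> 0"
  and cn: "\<And>j. j \<le> -1 \<Longrightarrow> k - w + j * (W - w) \<noteq> 0 \<and> 2 * k - w + 2 * j * (W - w) \<noteq> 0"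
  shows "y1 (Gb (w + k)) = of_int (2 * k - w) / 2 * a (Gb k)"
    and "y2 (Lb (W + k)) = 2 * a (Gb k)"
proof -
  have h1x: "\<forall>i. y1 i \<noteq> 0 \<longrightarrow> wt i = w + k" using h1 by blast
  have h2x: "\<forall>i. y2 i \<noteq> 0 \<longrightarrow> wt i = W + k" using h2 by blast
  define \<beta> where "\<beta> j = (if even j then a (Gb (k + j * (W - w))) else a (Lb (k + j * (W - w))))" for j
  define c where "c j = (if odd j then of_int (k - w + j * (W - w)) else of_int (2 * k - w + 2 * j * (W - w)) / 2 :: complex)" for j
  define d where "d j = (if odd j then 2 else of_int (k - 2 * w + (j - 3) * (W - w)) / 2 :: complex)" for j
  have fin: "finite {j. \<beta> j \<noteq> 0}"
  proof -
    have "{j. \<beta> j \<noteq> 0} \<subseteq> {j. a (Lb (k + j * (W - w))) \<noteq> 0} \<union> {j. a (Gb (k + j * (W - w))) \<noteq> 0}"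
      by (auto simp: \<beta>_def split: if_splits)
    moreover have "finite ({j. a (Lb (k + j * (W - w))) \<noteq> 0} \<union> {j. a (Gb (k + j * (W - w))) \<noteq> 0})"
      using fin_chain[OF a inj_Lb] fin_chain[OF a inj_Gb] D by simp
    ultimately show ?thesis by (rule finite_subset)
  qed
  have eq: "c j * \<beta> j + d j * \<beta> (j - 1) = (if j = 0 then y1 (Gb (w + k)) else if j = 1 then y2 (Lb (W + k)) else 0)" for j
  proof -
    let ?z = "w + k + j * (W - w)"
    have i1: "?z - w = k + j * (W - w)" by simp
    have i2: "?z - W = k + (j - 1) * (W - w)" by (simp add: algebra_simps)
    show ?thesis
    proof (cases "even j")
      case True
      have j1: "j \<noteq> 1" using True by (cases "j = 1") simp_all
      have e: "y1 (Gb ?z) + y2 (Gb ?z) = a (Gb (?z - w)) * (of_int ?z - 3/2 * of_int w) + a (Lb (?z - W)) * ((of_int ?z - of_int W) / 2 - of_int W)"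
        using E[of "Gb ?z"] by (simp add: R2[OF a] R5[OF a])
      have y1z: "y1 (Gb ?z) = (if j = 0 then y1 (Gb (w + k)) else 0)"
        using hz1[OF h1x D, where i="Gb ?z" and j=j] by simp
      have y2z: "y2 (Gb ?z) = 0" using hz2[OF h2x D, where i="Gb ?z" and j=j] j1 by simp
      have c3: "(of_int ?z - 3/2 * of_int w :: complex) = of_int (2 * k - w + 2 * j * (W - w)) / 2"
        by (simp add: field_simps)
      have c4: "((of_int ?z - of_int W) / 2 - of_int W :: complex) = of_int (k - 2 * w + (j - 3) * (W - w)) / 2"
        by (simp add: field_simps)
      show ?thesis using e y1z y2z True j1 unfolding i1 i2 c3 c4 \<beta>_def c_def d_def
        by (auto simp: algebra_simps)
    next
      case False
      have j0: "j \<noteq> 0" using False by (cases "j = 0") simp_all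
      have e: "y1 (Lb ?z) + y2 (Lb ?z) = a (Lb (?z - w)) * of_int (?z - 2 * w) + 2 * a (Gb (?z - W))"
        using E[of "Lb ?z"] by (simp add: R1[OF a] R4[OF a])
      have y1z: "y1 (Lb ?z) = 0" using hz1[OF h1x D, where i="Lb ?z" and j=j] j0 by simp
      have y2z: "y2 (Lb ?z) = (if j = 1 then y2 (Lb (W + k)) else 0)"
        using hz2[OF h2x D, where i="Lb ?z" and j=j] by (auto simp: add.commute)
      show ?thesis using e y1z y2z False j0 unfolding i1 i2 \<beta>_def c_def d_def
        by (auto simp: algebra_simps)
    qed
  qed
  have dn': "\<forall>j\<ge>2. d j \<noteq> 0"
  proof (intro allI impI)
    fix j :: int assume j: "j \<ge> 2"
    have "(of_int (k - 2 * w + (j - 3) * (W - w)) :: complex) \<noteq> 0" unfolding of_int_eq_0_iff by (rule dn[OF j])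
    then show "d j \<noteq> 0" unfolding d_def by simp
  qed
  have cn': "\<forall>j\<le>-1. c j \<noteq> 0"
  proof (intro allI impI)
    fix j :: int assume j: "j \<le> -1"
    have "(of_int (k - w + j * (W - w)) :: complex) \<noteq> 0" unfolding of_int_eq_0_iff using cn[OF j] by blast
    moreover have "(of_int (2 * k - w + 2 * j * (W - w)) :: complex) \<noteq> 0" unfolding of_int_eq_0_iff using cn[OF j] by blast
    ultimately show "c j \<noteq> 0" unfolding c_def by simp
  qed
  note ch = chain[where bb=\<beta> and c=c and d=d, OF fin eq dn' cn']
  show "y1 (Gb (w + k)) = of_int (2 * k - w) / 2 * a (Gb k)" using ch(2) unfolding c_def \<beta>_def by simp
  show "y2 (Lb (W + k)) = 2 * a (Gb k)" using ch(3) unfolding d_def \<beta>_def by simp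
qed


lemma zero_by_comps:
  assumes h: "\<And>i. y i \<noteq> 0 \<Longrightarrow> wt i = v" and l: "y (Lb v) = 0" and g: "y (Gb v) = 0"
    and c: "v = 0 \<Longrightarrow> y Cb = 0"
  shows "y i = 0"
proof (cases i)
  case (Lb m) then show ?thesis using h[of i] l by (cases "m = v") auto
next
  case (Gb m) then show ?thesis using h[of i] g by (cases "m = v") auto
next
  case Cb then show ?thesis using h[of i] c by (cases "v = 0") auto
qed

lemma T_LL_fwd:
  assumes a: "a \<in> sv_carrier"
  and E: "\<And>i. y1 i + y2 i = sv_br a (eb (Lb w)) i + sv_br a (eb (Lb W)) i"
  and h1: "\<And>i. y1 i \<noteq> 0 \<Longrightarrow> wt i = w + k" and h2: "\<And>i. y2 i \<noteq> 0 \<Longrightarrow> wt i = W + k"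
  and D: "w < W"
  and dnL: "\<And>j. j \<ge> 2 \<Longrightarrow> k - w + (j - 2) * (W - w) \<noteq> 0"
  and cnL: "\<And>j. j \<le> -1 \<Longrightarrow> k - w + j * (W - w) \<noteq> 0"
  and dnG: "\<And>j. j \<ge> 2 \<Longrightarrow> 2 * k - w + (2 * j - 3) * (W - w) \<noteq> 0"
  and cnG: "\<And>j. j \<le> -1 \<Longrightarrow> 2 * k - w + 2 * j * (W - w) \<noteq> 0"
  and y1z: "\<And>i. y1 i = 0" and kw: "k \<noteq> w" and kw2: "2 * k \<noteq> w" and Wk: "W + k \<noteq> 0"
  shows "y2 i = 0"
proof -
  note L = LL_L[OF a E h1 h2 D dnL cnL]
  note G = LL_G[OF a E h1 h2 D dnG cnG]
  have aL: "a (Lb k) = 0" using L(2) y1z kw by simp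
  have kw2c: "(2 * of_int k :: complex) \<noteq> of_int w" using kw2 by (metis of_int_eq_iff of_int_mult of_int_numeral)
  have aG: "a (Gb k) = 0" using G(2) y1z kw2c by simp
  show ?thesis
  proof (rule zero_by_comps[OF h2])
    show "y2 (Lb (W + k)) = 0" using L(3) aL by simp
    show "y2 (Gb (W + k)) = 0" using G(3) aG by simp
    show "W + k = 0 \<Longrightarrow> y2 Cb = 0" using Wk by simp
  qed
qed

lemma T_LL_bwd:
  assumes a: "a \<in> sv_carrier"
  and E: "\<And>i. y1 i + y2 i = sv_br a (eb (Lb w)) i + sv_br a (eb (Lb W)) i"
  and h1: "\<And>i. y1 i \<noteq> 0 \<Longrightarrow> wt i = w + k" and h2: "\<And>i. y2 i \<noteq> 0 \<Longrightarrow> wt i = W + k"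
  and D: "w < W"
  and dnG: "\<And>j. j \<ge> 2 \<Longrightarrow> 2 * k - w + (2 * j - 3) * (W - w) \<noteq> 0"
  and cnG: "\<And>j. j \<le> -1 \<Longrightarrow> 2 * k - w + 2 * j * (W - w) \<noteq> 0"
  and Lc: "((\<forall>j\<ge>2. k - w + (j - 2) * (W - w) \<noteq> 0) \<and> (\<forall>j\<le>-1. k - w + j * (W - w) \<noteq> 0))
           \<or> (y1 (Lb (w + k)) = 0 \<and> w + k \<noteq> 0)"
  and y2z: "\<And>i. y2 i = 0" and kW: "k \<noteq> W" and kW2: "2 * k \<noteq> W"
  shows "y1 i = 0"
proof -
  note G = LL_G[OF a E h1 h2 D dnG cnG]
  have kW2c: "(2 * of_int k :: complex) \<noteq> of_int W" using kW2 by (metis of_int_eq_iff of_int_mult of_int_numeral)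
  have aG: "a (Gb k) = 0" using G(3) y2z kW2c by simp
  have gG: "y1 (Gb (w + k)) = 0" using G(2) aG by simp
  show ?thesis
  proof (cases "(\<forall>j\<ge>2. k - w + (j - 2) * (W - w) \<noteq> 0) \<and> (\<forall>j\<le>-1. k - w + j * (W - w) \<noteq> 0)")
    case True
    have dnL: "\<And>j. j \<ge> 2 \<Longrightarrow> k - w + (j - 2) * (W - w) \<noteq> 0" using True by blast
    have cnL: "\<And>j. j \<le> -1 \<Longrightarrow> k - w + j * (W - w) \<noteq> 0" using True by blast
    note L = LL_L[OF a E h1 h2 D dnL cnL]
    have aL: "a (Lb k) = 0" using L(3) y2z kW by simp
    show ?thesis
    proof (rule zero_by_comps[OF h1])
      show "y1 (Lb (w + k)) = 0" using L(2) aL by simp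
      show "y1 (Gb (w + k)) = 0" by (rule gG)
      show "y1 Cb = 0" if wk: "w + k = 0"
      proof -
        have e: "y1 Cb + y2 Cb = a (Lb (- w)) * ((of_int w - of_int w ^ 3) / 12) + a (Lb (- W)) * ((of_int W - of_int W ^ 3) / 12)"
          using E[of Cb] by (simp add: R3[OF a])
        have m1: "- w = k" using wk by simp
        have m2: "- W = k + (-1) * (W - w)" using wk by simp
        have m3: "(-1::int) \<noteq> 0" by simp
        have "a (Lb (k + (-1) * (W - w))) = 0" using L(1)[of "-1"] by simp
        then have "a (Lb (- W)) = 0" unfolding m2 .
        then show ?thesis using e y2z[of Cb] aL unfolding m1 by simp
      qed
    qed
  next
    case False
    then have ex: "y1 (Lb (w + k)) = 0" "w + k \<noteq> 0" using Lc by auto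
    show ?thesis
      by (rule zero_by_comps[OF h1]) (use ex gG in auto)
  qed
qed

lemma T_GG_bwd:
  assumes a: "a \<in> sv_carrier"
  and E: "\<And>i. y1 i + y2 i = sv_br a (eb (Gb w)) i + sv_br a (eb (Gb W)) i"
  and h1: "\<And>i. y1 i \<noteq> 0 \<Longrightarrow> wt i = w + k" and h2: "\<And>i. y2 i \<noteq> 0 \<Longrightarrow> wt i = W + k"
  and D: "w < W"
  and Gc: "((\<forall>j\<ge>2. k - 2 * w + (j - 3) * (W - w) \<noteq> 0) \<and> (\<forall>j\<le>-1. k - 2 * w + j * (W - w) \<noteq> 0))
           \<or> y1 (Gb (w + k)) = 0"
  and y2z: "\<And>i. y2 i = 0" and kW: "k \<noteq> 2 * W"
  shows "y1 i = 0"
proof -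
  note L = GG_L[OF a E h1 h2 D]
  have aG: "a (Gb k) = 0" using L(3) y2z by simp
  have lL: "y1 (Lb (w + k)) = 0" using L(2) aG by simp
  have gG: "y1 (Gb (w + k)) = 0"
  proof (cases "(\<forall>j\<ge>2. k - 2 * w + (j - 3) * (W - w) \<noteq> 0) \<and> (\<forall>j\<le>-1. k - 2 * w + j * (W - w) \<noteq> 0)")
    case True
    have dnG: "\<And>j. j \<ge> 2 \<Longrightarrow> k - 2 * w + (j - 3) * (W - w) \<noteq> 0" using True by blast
    have cnG: "\<And>j. j \<le> -1 \<Longrightarrow> k - 2 * w + j * (W - w) \<noteq> 0" using True by blast
    note G = GG_G[OF a E h1 h2 D dnG cnG]
    have kWc: "(of_int k :: complex) \<noteq> 2 * of_int W" using kW by (metis of_int_eq_iff of_int_mult of_int_numeral)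
    have aL: "a (Lb k) = 0" using G(3) y2z kWc by simp
    then show ?thesis using G(2) by simp
  next
    case False then show ?thesis using Gc by auto
  qed
  show ?thesis
  proof (rule zero_by_comps[OF h1])
    show "y1 (Lb (w + k)) = 0" by (rule lL)
    show "y1 (Gb (w + k)) = 0" by (rule gG)
    show "y1 Cb = 0" if wk: "w + k = 0"
    proof -
      have e: "y1 Cb + y2 Cb = a (Gb (- w)) * ((of_int w ^ 2 - 1/4) / 3) + a (Gb (- W)) * ((of_int W ^ 2 - 1/4) / 3)"
        using E[of Cb] by (simp add: R6[OF a])
      have m1: "- w = k" using wk by simp
      have m2: "- W = k + (-1) * (W - w)" using wk by simp
      have m3: "(-1::int) \<noteq> 0" by simp
      have "a (Gb (k + (-1) * (W - w))) = 0" using L(1)[of "-1"] by simp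
      then have "a (Gb (- W)) = 0" unfolding m2 .
      then show ?thesis using e y2z[of Cb] aG unfolding m1 by simp
    qed
  qed
qed

lemma T_LG_fwd:
  assumes a: "a \<in> sv_carrier"
  and E: "\<And>i. y1 i + y2 i = sv_br a (eb (Lb w)) i + sv_br a (eb (Gb W)) i"
  and h1: "\<And>i. y1 i \<noteq> 0 \<Longrightarrow> wt i = w + k" and h2: "\<And>i. y2 i \<noteq> 0 \<Longrightarrow> wt i = W + k"
  and D: "w < W"
  and dn: "\<And>j. j \<ge> 2 \<Longrightarrow> k - 2 * w + (j - 3) * (W - w) \<noteq> 0"
  and cn: "\<And>j. j \<le> -1 \<Longrightarrow> k - w + j * (W - w) \<noteq> 0 \<and> 2 * k - w + 2 * j * (W - w) \<noteq> 0"
  and y1z: "\<And>i. y1 i = 0" and kw: "k \<noteq> w" and kw2: "2 * k \<noteq> w" and Wk: "W + k \<noteq> 0"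
  shows "y2 i = 0"
proof -
  note A = LG_A[OF a E h1 h2 D dn cn]
  note B = LG_B[OF a E h1 h2 D dn cn]
  have aL: "a (Lb k) = 0" using A(1) y1z kw by simp
  have kw2c: "(2 * of_int k :: complex) \<noteq> of_int w" using kw2 by (metis of_int_eq_iff of_int_mult of_int_numeral)
  have aG: "a (Gb k) = 0" using B(1) y1z kw2c by simp
  show ?thesis
  proof (rule zero_by_comps[OF h2])
    show "y2 (Lb (W + k)) = 0" using B(2) aG by simp
    show "y2 (Gb (W + k)) = 0" using A(2) aL by simp
    show "W + k = 0 \<Longrightarrow> y2 Cb = 0" using Wk by simp
  qed
qed


lemma Hany:
  fixes D c m :: int
  assumes "D > 0" "\<bar>c\<bar> < D" "c \<noteq> 0"
  shows "c + m * D \<noteq> 0"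
proof (cases "m = 0")
  case False
  show ?thesis
  proof (cases "m \<ge> 1")
    case True
    then have "m * D \<ge> 1 * D" using assms(1) by (intro mult_right_mono) auto
    then show ?thesis using assms by linarith
  next
    case False2: False
    then have "m \<le> -1" using False by simp
    then have "m * D \<le> (-1) * D" using assms(1) by (intro mult_right_mono) auto
    then show ?thesis using assms by linarith
  qed
qed (use assms in simp)

lemma Hnz:
  fixes D c m :: int
  assumes "D > 0" "\<bar>c\<bar> < D" "m \<noteq> 0"
  shows "c + m * D \<noteq> 0"
proof (cases "c = 0")
  case True then show ?thesis using assms by simp
next
  case False then show ?thesis using Hany assms by blast
qed

definition locinner :: "((sv_idx \<Rightarrow> complex) \<Rightarrow> (sv_idx \<Rightarrow> complex)) \<Rightarrow> bool" where
  "locinner P \<longleftrightarrow> (\<forall>x\<in>sv_carrier. \<exists>a\<in>sv_carrier. P x = sv_br a x)"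

lemma pair_car: "(\<lambda>i. s1 * eb f i + s2 * eb F i) \<in> sv_carrier"
  by (intro carrier_add carrier_scale eb_carrier)

lemma lin2:
  assumes "sv_linear P"
  shows "P (\<lambda>i. s1 * eb f i + s2 * eb F i) = (\<lambda>i. s1 * P (eb f) i + s2 * P (eb F) i)"
proof -
  have add: "\<forall>x\<in>sv_carrier. \<forall>y\<in>sv_carrier. P (\<lambda>k. x k + y k) = (\<lambda>k. P x k + P y k)"
    and scl: "\<forall>c. \<forall>x\<in>sv_carrier. P (\<lambda>k. c * x k) = (\<lambda>k. c * P x k)"
    using assms unfolding sv_linear_def by blast+
  have "P (\<lambda>i. s1 * eb f i + s2 * eb F i) = (\<lambda>i. P (\<lambda>i. s1 * eb f i) i + P (\<lambda>i. s2 * eb F i) i)"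
    by (rule add[rule_format]) (simp_all add: carrier_scale)
  also have "\<dots> = (\<lambda>i. s1 * P (eb f) i + s2 * P (eb F) i)"
    using scl eb_carrier by simp
  finally show ?thesis .
qed

lemma br_diff_left:
  assumes "a \<in> sv_carrier" "b \<in> sv_carrier"
  shows "sv_br (\<lambda>k. a k - b k) x = (\<lambda>i. sv_br a x i - sv_br b x i)"
proof -
  have e1: "(\<lambda>k. a k - b k) = (\<lambda>k. a k + (-1) * b k)" by simp
  have "sv_br (\<lambda>k. a k + (-1) * b k) x = (\<lambda>k. sv_br a x k + sv_br (\<lambda>k. (-1) * b k) x k)"
    by (rule br_add_left[OF assms(1) carrier_scale[OF assms(2)]])
  also have "\<dots> = (\<lambda>k. sv_br a x k + (-1) * sv_br b x k)" by (simp only: br_scale_left)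
  finally show ?thesis unfolding e1 by simp
qed

lemma car_diff: "a \<in> sv_carrier \<Longrightarrow> b \<in> sv_carrier \<Longrightarrow> (\<lambda>k. a k - b k) \<in> sv_carrier"
  using carrier_add[OF _ carrier_scale[of b "-1"]] by simp


locale LD =
  fixes Psi :: "(sv_idx \<Rightarrow> complex) \<Rightarrow> sv_idx \<Rightarrow> complex"
  assumes lin: "sv_linear Psi" and loc: "locinner Psi" and z0: "Psi (eb (Lb 0)) = (\<lambda>i. 0)"
begin

definition Y :: "int \<Rightarrow> sv_idx \<Rightarrow> sv_idx \<Rightarrow> complex" where
  "Y k g = gc k (Psi (eb g)) (wt g)"

lemma Pcar: "Psi (eb g) \<in> sv_carrier"
  using lin eb_carrier unfolding sv_linear_def by blast

lemma pw: "\<exists>c\<in>sv_carrier. Psi (eb g) = sv_br c (eb g)"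
  using loc eb_carrier unfolding locinner_def by blast

lemma hY: "Y k g i \<noteq> 0 \<Longrightarrow> wt i = wt g + k"
  by (auto simp: Y_def gc_def split: if_splits)

lemma Y_at: "wt i = wt g + k \<Longrightarrow> Y k g i = Psi (eb g) i"
  by (simp add: Y_def gc_def)

lemma pairY: "\<exists>a\<in>sv_carrier. \<forall>i. Y k f i + Y k F i = sv_br a (eb f) i + sv_br a (eb F) i"
proof -
  have "(\<lambda>i. gc k (Psi (eb f)) (wt f) i + gc k (Psi (eb F)) (wt F) i) \<in> Vsp (\<lambda>i. eb f i + eb F i)"
  proof (rule grading)
    show "Psi (\<lambda>i. s1 * eb f i + s2 * eb F i) = (\<lambda>i. s1 * Psi (eb f) i + s2 * Psi (eb F) i)" for s1 s2
      by (rule lin2[OF lin])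
    show "\<exists>a\<in>sv_carrier. Psi (\<lambda>i. s1 * eb f i + s2 * eb F i) = sv_br a (\<lambda>i. s1 * eb f i + s2 * eb F i)" for s1 s2
      using loc pair_car unfolding locinner_def by blast
  qed (rule Pcar)+
  then obtain a where a: "a \<in> sv_carrier" "(\<lambda>i. Y k f i + Y k F i) = sv_br a (\<lambda>i. eb f i + eb F i)"
    unfolding Vsp_def Y_def by blast
  then show ?thesis using br_add_right[OF eb_carrier eb_carrier, of a f F] by (metis)
qed

lemma Yzero_nz:
  assumes k: "k \<noteq> 0"
  shows "Y k g i = 0"
proof -
  have L0: "Y k (Lb 0) i = 0" for i by (simp add: Y_def gc_def z0)
  have LW: "Y k (Lb W) i = 0" if W: "W > 2 * \<bar>k\<bar>" for W i
  proof -
    obtain a where a: "a \<in> sv_carrier" "\<And>i. Y k (Lb 0) i + Y k (Lb W) i = sv_br a (eb (Lb 0)) i + sv_br a (eb (Lb W)) i"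
      using pairY by blast
    show ?thesis
    proof (rule T_LL_fwd[OF a(1) a(2)])
      show "Y k (Lb 0) i \<noteq> 0 \<Longrightarrow> wt i = 0 + k" for i using hY by fastforce
      show "Y k (Lb W) i \<noteq> 0 \<Longrightarrow> wt i = W + k" for i using hY by fastforce
      show "0 < W" using W by simp
      show "k - 0 + (j - 2) * (W - 0) \<noteq> 0" for j by (rule Hany) (use W k in auto)
      show "k - 0 + j * (W - 0) \<noteq> 0" if "j \<le> -1" for j by (rule Hnz) (use W that in auto)
      show "2 * k - 0 + (2 * j - 3) * (W - 0) \<noteq> 0" for j
      proof (rule Hnz)
        show "2 * j - 3 \<noteq> 0" by presburger
      qed (use W in auto)
      show "2 * k - 0 + 2 * j * (W - 0) \<noteq> 0" if "j \<le> -1" for j by (rule Hnz) (use W that in auto)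
      show "Y k (Lb 0) i = 0" for i by (rule L0)
    qed (use W k in auto)
  qed
  have GW: "Y k (Gb W) i = 0" if W: "W > 2 * \<bar>k\<bar>" for W i
  proof -
    obtain a where a: "a \<in> sv_carrier" "\<And>i. Y k (Lb 0) i + Y k (Gb W) i = sv_br a (eb (Lb 0)) i + sv_br a (eb (Gb W)) i"
      using pairY by blast
    show ?thesis
    proof (rule T_LG_fwd[OF a(1) a(2)])
      show "Y k (Lb 0) i \<noteq> 0 \<Longrightarrow> wt i = 0 + k" for i using hY by fastforce
      show "Y k (Gb W) i \<noteq> 0 \<Longrightarrow> wt i = W + k" for i using hY by fastforce
      show "0 < W" using W by simp
      show "k - 2 * 0 + (j - 3) * (W - 0) \<noteq> 0" for j by (rule Hany) (use W k in auto)
      show "k - 0 + j * (W - 0) \<noteq> 0 \<and> 2 * k - 0 + 2 * j * (W - 0) \<noteq> 0" if "j \<le> -1" for j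
        using Hnz[of "W - 0" "k - 0" j] Hnz[of "W - 0" "2 * k - 0" "2 * j"] W that by auto
      show "Y k (Lb 0) i = 0" for i by (rule L0)
    qed (use W k in auto)
  qed
  have Lw: "Y k (Lb w) i = 0" for w i
  proof -
    define D where "D = 4 * \<bar>k\<bar> + 2 * \<bar>w\<bar> + 1"
    define W where "W = w + D"
    have WD: "W - w = D" by (simp add: W_def)
    have D0: "D > 0" by (simp add: D_def)
    have W2: "W > 2 * \<bar>k\<bar>" by (simp add: W_def D_def)
    obtain a where a: "a \<in> sv_carrier" "\<And>i. Y k (Lb w) i + Y k (Lb W) i = sv_br a (eb (Lb w)) i + sv_br a (eb (Lb W)) i"
      using pairY by blast
    show ?thesis
    proof (rule T_LL_bwd[OF a(1) a(2)])
      show "Y k (Lb w) i \<noteq> 0 \<Longrightarrow> wt i = w + k" for i using hY by fastforce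
      show "Y k (Lb W) i \<noteq> 0 \<Longrightarrow> wt i = W + k" for i using hY by fastforce
      show "w < W" using D0 by (simp add: W_def)
      show "2 * k - w + (2 * j - 3) * (W - w) \<noteq> 0" for j unfolding WD
      proof (rule Hnz)
        show "2 * j - 3 \<noteq> 0" by presburger
      qed (use D0 in \<open>auto simp: D_def\<close>)
      show "2 * k - w + 2 * j * (W - w) \<noteq> 0" if "j \<le> -1" for j unfolding WD by (rule Hnz) (use D0 that in \<open>auto simp: D_def\<close>)
      show "((\<forall>j\<ge>2. k - w + (j - 2) * (W - w) \<noteq> 0) \<and> (\<forall>j\<le>-1. k - w + j * (W - w) \<noteq> 0))
           \<or> (Y k (Lb w) (Lb (w + k)) = 0 \<and> w + k \<noteq> 0)"
      proof (cases "k = w")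
        case True
        obtain c where c: "c \<in> sv_carrier" "Psi (eb (Lb w)) = sv_br c (eb (Lb w))" using pw by blast
        have "Y k (Lb w) (Lb (w + k)) = sv_br c (eb (Lb w)) (Lb (w + k))" using Y_at[of "Lb (w + k)" "Lb w" k] c(2) by simp
        also have "\<dots> = 0" using True by (simp add: R1[OF c(1)])
        finally show ?thesis using True k by simp
      next
        case False
        have "\<forall>j\<ge>2. k - w + (j - 2) * (W - w) \<noteq> 0" unfolding WD
          using Hany[of D "k - w"] D0 False by (auto simp: D_def)
        moreover have "\<forall>j\<le>-1. k - w + j * (W - w) \<noteq> 0" unfolding WD
          using Hany[of D "k - w"] D0 False by (auto simp: D_def)
        ultimately show ?thesis by blast
      qed
      show "Y k (Lb W) i = 0" for i by (rule LW[OF W2])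
      show "k \<noteq> W" using W2 by auto
      show "2 * k \<noteq> W" using W2 by auto
    qed
  qed
  have Gw: "Y k (Gb w) i = 0" for w i
  proof -
    define D where "D = 4 * \<bar>k\<bar> + 2 * \<bar>w\<bar> + 1"
    define W where "W = w + D"
    have WD: "W - w = D" by (simp add: W_def)
    have D0: "D > 0" by (simp add: D_def)
    have W2: "W > 2 * \<bar>k\<bar>" by (simp add: W_def D_def)
    obtain a where a: "a \<in> sv_carrier" "\<And>i. Y k (Gb w) i + Y k (Gb W) i = sv_br a (eb (Gb w)) i + sv_br a (eb (Gb W)) i"
      using pairY by blast
    show ?thesis
    proof (rule T_GG_bwd[OF a(1) a(2)])
      show "Y k (Gb w) i \<noteq> 0 \<Longrightarrow> wt i = w + k" for i using hY by fastforce
      show "Y k (Gb W) i \<noteq> 0 \<Longrightarrow> wt i = W + k" for i using hY by fastforce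
      show "w < W" using D0 by (simp add: W_def)
      show "((\<forall>j\<ge>2. k - 2 * w + (j - 3) * (W - w) \<noteq> 0) \<and> (\<forall>j\<le>-1. k - 2 * w + j * (W - w) \<noteq> 0))
           \<or> Y k (Gb w) (Gb (w + k)) = 0"
      proof (cases "k = 2 * w")
        case True
        obtain c where c: "c \<in> sv_carrier" "Psi (eb (Gb w)) = sv_br c (eb (Gb w))" using pw by blast
        have "Y k (Gb w) (Gb (w + k)) = sv_br c (eb (Gb w)) (Gb (w + k))" using Y_at[of "Gb (w + k)" "Gb w" k] c(2) by simp
        also have "\<dots> = 0" using True by (simp add: R5[OF c(1)])
        finally show ?thesis by simp
      next
        case False
        have "\<forall>j\<ge>2. k - 2 * w + (j - 3) * (W - w) \<noteq> 0" unfolding WD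
          using Hany[of D "k - 2 * w"] D0 False by (auto simp: D_def)
        moreover have "\<forall>j\<le>-1. k - 2 * w + j * (W - w) \<noteq> 0" unfolding WD
          using Hany[of D "k - 2 * w"] D0 False by (auto simp: D_def)
        ultimately show ?thesis by blast
      qed
      show "Y k (Gb W) i = 0" for i by (rule GW[OF W2])
      show "k \<noteq> 2 * W" using W2 by auto
    qed
  qed
  have C: "Y k Cb i = 0" for i
  proof -
    obtain c where c: "c \<in> sv_carrier" "Psi (eb Cb) = sv_br c (eb Cb)" using pw by blast
    then show ?thesis by (simp add: Y_def gc_def R7)
  qed
  show ?thesis using Lw Gw C by (cases g) auto
qed


lemma main:
  "\<exists>cs\<in>sv_carrier. \<forall>g. Psi (eb g) = sv_br cs (eb g)"
proof -
  obtain c1 where c1: "c1 \<in> sv_carrier" "Psi (eb (Lb 1)) = sv_br c1 (eb (Lb 1))" using pw by blast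
  define cs where "cs = cc (c1 (Lb 0)) (c1 (Gb 0))"
  have csc: "cs \<in> sv_carrier" unfolding cs_def by (rule cc_car)
  define Z where "Z g = (\<lambda>i. Y 0 g i - sv_br cs (eb g) i)" for g
  have hZ: "Z g i \<noteq> 0 \<Longrightarrow> wt i = wt g + 0" for g i
    using hY[of 0 g i] cc_br0[of i g] unfolding Z_def cs_def by fastforce
  have pairZ: "\<exists>a\<in>sv_carrier. \<forall>i. Z f i + Z F i = sv_br a (eb f) i + sv_br a (eb F) i" for f F
  proof -
    obtain a where a: "a \<in> sv_carrier" "\<And>i. Y 0 f i + Y 0 F i = sv_br a (eb f) i + sv_br a (eb F) i"
      using pairY by blast
    show ?thesis
    proof (intro bexI allI)
      fix i
      show "Z f i + Z F i = sv_br (\<lambda>k. a k - cs k) (eb f) i + sv_br (\<lambda>k. a k - cs k) (eb F) i"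
        using a(2)[of i] unfolding Z_def br_diff_left[OF a(1) csc] by simp
    qed (rule car_diff[OF a(1) csc])
  qed
  have Z1: "Z (Lb 1) i = 0" for i
  proof (cases "wt i = 1")
    case True
    then have "Y 0 (Lb 1) i = sv_br c1 (eb (Lb 1)) i" using Y_at[of i "Lb 1" 0] c1(2) by simp
    moreover have "sv_br c1 (eb (Lb 1)) i = sv_br cs (eb (Lb 1)) i"
      using True unfolding cs_def by (cases i) (auto simp: R1[OF c1(1)] R2[OF c1(1)] R1[OF cc_car] R2[OF cc_car])
    ultimately show ?thesis by (simp add: Z_def)
  next
    case False
    then show ?thesis using hZ[of "Lb 1" i] by auto
  qed
  have ZLW: "Z (Lb W) i = 0" if W: "W \<ge> 4" for W i
  proof -
    obtain a where a: "a \<in> sv_carrier" "\<And>i. Z (Lb 1) i + Z (Lb W) i = sv_br a (eb (Lb 1)) i + sv_br a (eb (Lb W)) i"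
      using pairZ by blast
    show ?thesis
    proof (rule T_LL_fwd[OF a(1) a(2)])
      show "Z (Lb 1) i \<noteq> 0 \<Longrightarrow> wt i = 1 + 0" for i using hZ by fastforce
      show "Z (Lb W) i \<noteq> 0 \<Longrightarrow> wt i = W + 0" for i using hZ by fastforce
      show "1 < W" using W by simp
      show "0 - 1 + (j - 2) * (W - 1) \<noteq> 0" for j by (rule Hany) (use W in auto)
      show "0 - 1 + j * (W - 1) \<noteq> 0" for j by (rule Hany) (use W in auto)
      show "2 * 0 - 1 + (2 * j - 3) * (W - 1) \<noteq> 0" for j by (rule Hany) (use W in auto)
      show "2 * 0 - 1 + 2 * j * (W - 1) \<noteq> 0" for j by (rule Hany) (use W in auto)
      show "Z (Lb 1) i = 0" for i by (rule Z1)
    qed (use W in auto)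
  qed
  have ZGW: "Z (Gb W) i = 0" if W: "W \<ge> 4" for W i
  proof -
    obtain a where a: "a \<in> sv_carrier" "\<And>i. Z (Lb 1) i + Z (Gb W) i = sv_br a (eb (Lb 1)) i + sv_br a (eb (Gb W)) i"
      using pairZ by blast
    show ?thesis
    proof (rule T_LG_fwd[OF a(1) a(2)])
      show "Z (Lb 1) i \<noteq> 0 \<Longrightarrow> wt i = 1 + 0" for i using hZ by fastforce
      show "Z (Gb W) i \<noteq> 0 \<Longrightarrow> wt i = W + 0" for i using hZ by fastforce
      show "1 < W" using W by simp
      show "0 - 2 * 1 + (j - 3) * (W - 1) \<noteq> 0" for j by (rule Hany) (use W in auto)
      show "0 - 1 + j * (W - 1) \<noteq> 0 \<and> 2 * 0 - 1 + 2 * j * (W - 1) \<noteq> 0" for j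
        using Hany[of "W - 1" "0 - 1" j] Hany[of "W - 1" "2 * 0 - 1" "2 * j"] W by auto
      show "Z (Lb 1) i = 0" for i by (rule Z1)
    qed (use W in auto)
  qed
  have ZL0: "Z (Lb 0) i = 0" for i
  proof -
    have "Y 0 (Lb 0) i = 0" by (simp add: Y_def gc_def z0)
    moreover have "sv_br cs (eb (Lb 0)) i = 0"
      unfolding cs_def by (cases i) (auto simp: R1[OF cc_car] R2[OF cc_car] R3[OF cc_car])
    ultimately show ?thesis by (simp add: Z_def)
  qed
  have ZLw: "Z (Lb w) i = 0" if w: "w \<noteq> 0" for w i
  proof -
    define D where "D = 2 * \<bar>w\<bar> + 4"
    define W where "W = w + D"
    have WD: "W - w = D" by (simp add: W_def)
    have D0: "D > 0" by (simp add: D_def)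
    have W4: "W \<ge> 4" by (simp add: W_def D_def)
    obtain a where a: "a \<in> sv_carrier" "\<And>i. Z (Lb w) i + Z (Lb W) i = sv_br a (eb (Lb w)) i + sv_br a (eb (Lb W)) i"
      using pairZ by blast
    show ?thesis
    proof (rule T_LL_bwd[OF a(1) a(2)])
      show "Z (Lb w) i \<noteq> 0 \<Longrightarrow> wt i = w + 0" for i using hZ by fastforce
      show "Z (Lb W) i \<noteq> 0 \<Longrightarrow> wt i = W + 0" for i using hZ by fastforce
      show "w < W" using D0 by (simp add: W_def)
      show "2 * 0 - w + (2 * j - 3) * (W - w) \<noteq> 0" for j unfolding WD by (rule Hany) (use D0 w in \<open>auto simp: D_def\<close>)
      show "2 * 0 - w + 2 * j * (W - w) \<noteq> 0" for j unfolding WD by (rule Hany) (use D0 w in \<open>auto simp: D_def\<close>)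
      have "\<forall>j\<ge>2. 0 - w + (j - 2) * (W - w) \<noteq> 0" unfolding WD
        using Hany[of D "0 - w"] D0 w by (auto simp: D_def)
      moreover have "\<forall>j\<le>-1. 0 - w + j * (W - w) \<noteq> 0" unfolding WD
        using Hany[of D "0 - w"] D0 w by (auto simp: D_def)
      ultimately show "((\<forall>j\<ge>2. 0 - w + (j - 2) * (W - w) \<noteq> 0) \<and> (\<forall>j\<le>-1. 0 - w + j * (W - w) \<noteq> 0))
           \<or> (Z (Lb w) (Lb (w + 0)) = 0 \<and> w + 0 \<noteq> 0)" by blast
      show "Z (Lb W) i = 0" for i by (rule ZLW[OF W4])
      show "0 \<noteq> W" using W4 by auto
      show "2 * 0 \<noteq> W" using W4 by auto
    qed
  qed
  have ZGw: "Z (Gb w) i = 0" for w i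
  proof -
    define D where "D = 2 * \<bar>w\<bar> + 4"
    define W where "W = w + D"
    have WD: "W - w = D" by (simp add: W_def)
    have D0: "D > 0" by (simp add: D_def)
    have W4: "W \<ge> 4" by (simp add: W_def D_def)
    obtain a where a: "a \<in> sv_carrier" "\<And>i. Z (Gb w) i + Z (Gb W) i = sv_br a (eb (Gb w)) i + sv_br a (eb (Gb W)) i"
      using pairZ by blast
    show ?thesis
    proof (rule T_GG_bwd[OF a(1) a(2)])
      show "Z (Gb w) i \<noteq> 0 \<Longrightarrow> wt i = w + 0" for i using hZ by fastforce
      show "Z (Gb W) i \<noteq> 0 \<Longrightarrow> wt i = W + 0" for i using hZ by fastforce
      show "w < W" using D0 by (simp add: W_def)
      show "((\<forall>j\<ge>2. 0 - 2 * w + (j - 3) * (W - w) \<noteq> 0) \<and> (\<forall>j\<le>-1. 0 - 2 * w + j * (W - w) \<noteq> 0))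
           \<or> Z (Gb w) (Gb (w + 0)) = 0"
      proof (cases "w = 0")
        case True
        obtain c where c: "c \<in> sv_carrier" "Psi (eb (Gb 0)) = sv_br c (eb (Gb 0))" using pw by blast
        have "Y 0 (Gb 0) (Gb 0) = sv_br c (eb (Gb 0)) (Gb 0)" using Y_at[of "Gb 0" "Gb 0" 0] c(2) by simp
        also have "\<dots> = 0" by (simp add: R5[OF c(1)])
        finally have "Y 0 (Gb 0) (Gb 0) = 0" .
        moreover have "sv_br cs (eb (Gb 0)) (Gb 0) = 0" by (simp add: R5[OF csc])
        ultimately show ?thesis using True by (simp add: Z_def)
      next
        case False
        have "\<forall>j\<ge>2. 0 - 2 * w + (j - 3) * (W - w) \<noteq> 0" unfolding WD
          using Hany[of D "0 - 2 * w"] D0 False by (auto simp: D_def)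
        moreover have "\<forall>j\<le>-1. 0 - 2 * w + j * (W - w) \<noteq> 0" unfolding WD
          using Hany[of D "0 - 2 * w"] D0 False by (auto simp: D_def)
        ultimately show ?thesis by blast
      qed
      show "Z (Gb W) i = 0" for i by (rule ZGW[OF W4])
      show "0 \<noteq> 2 * W" using W4 by auto
    qed
  qed
  have ZC: "Z Cb i = 0" for i
  proof -
    obtain c where c: "c \<in> sv_carrier" "Psi (eb Cb) = sv_br c (eb Cb)" using pw by blast
    then show ?thesis by (simp add: Z_def Y_def gc_def R7)
  qed
  have Zall: "Z g i = 0" for g i
  proof (cases g)
    case (Lb w) then show ?thesis using ZLw ZL0 by (cases "w = 0") auto
  qed (use ZGw ZC in auto)
  show ?thesis
  proof (intro bexI[OF _ csc] allI ext)
    fix g i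
    show "Psi (eb g) i = sv_br cs (eb g) i"
    proof (cases "wt i = wt g")
      case True
      then have "Y 0 g i = Psi (eb g) i" using Y_at[of i g 0] by simp
      then show ?thesis using Zall[of g i] unfolding Z_def by simp
    next
      case False
      define k where "k = wt i - wt g"
      have k: "k \<noteq> 0" using False by (simp add: k_def)
      have "Y k g i = Psi (eb g) i" using Y_at[of i g k] by (simp add: k_def)
      then have "Psi (eb g) i = 0" using Yzero_nz[OF k] by simp
      moreover have "sv_br cs (eb g) i = 0" unfolding cs_def by (rule cc_br0[OF False])
      ultimately show ?thesis by simp
    qed
  qed
qed

end

lemma local_inner:
  assumes lin: "sv_linear Delta" and loc: "locinner Delta"
  shows "\<exists>a\<in>sv_carrier. \<forall>x\<in>sv_carrier. Delta x = sv_br a x"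
proof -
  obtain a0 where a0: "a0 \<in> sv_carrier" "Delta (eb (Lb 0)) = sv_br a0 (eb (Lb 0))"
    using loc eb_carrier unfolding locinner_def by blast
  define Psi where "Psi x = (\<lambda>i. Delta x i - sv_br a0 x i)" for x
  have linP: "sv_linear Psi"
    using lin br_linear[of a0] unfolding sv_linear_def Psi_def
    by (auto simp: car_diff algebra_simps fun_eq_iff)
  have locP: "locinner Psi"
    unfolding locinner_def
  proof
    fix x assume x: "x \<in> sv_carrier"
    then obtain b where b: "b \<in> sv_carrier" "Delta x = sv_br b x" using loc unfolding locinner_def by blast
    show "\<exists>a\<in>sv_carrier. Psi x = sv_br a x"
      by (rule bexI[OF _ car_diff[OF b(1) a0(1)]]) (simp add: Psi_def b(2) br_diff_left[OF b(1) a0(1)])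
  qed
  have z0: "Psi (eb (Lb 0)) = (\<lambda>i. 0)" by (simp add: Psi_def a0(2))
  interpret LD Psi by unfold_locales (rule linP, rule locP, rule z0)
  obtain cs where cs: "cs \<in> sv_carrier" "\<And>g. Psi (eb g) = sv_br cs (eb g)" using main by blast
  have basis: "Delta (eb g) = sv_br (\<lambda>k. a0 k + cs k) (eb g)" for g
    using cs(2)[of g] unfolding br_add_left[OF a0(1) cs(1)] Psi_def by (auto simp: fun_eq_iff algebra_simps)
  show ?thesis
  proof (rule bexI[OF _ carrier_add[OF a0(1) cs(1)]], rule ballI)
    fix x assume "x \<in> sv_carrier"
    then show "Delta x = sv_br (\<lambda>k. a0 k + cs k) x" by (rule agree_on_basis[OF assms(1) br_linear basis])
  qed
qed

theorem corollary4p4: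
  assumes "sv_local_derivation \<Delta>"
  shows "sv_Der \<Delta>"
proof -
  have lin: "sv_linear \<Delta>" using assms unfolding sv_local_derivation_def by blast
  have loc: "locinner \<Delta>"
    unfolding locinner_def
  proof
    fix x assume x: "x \<in> sv_carrier"
    then obtain D where D: "sv_Der D" "\<Delta> x = D x" using assms unfolding sv_local_derivation_def by blast
    obtain a where a: "a \<in> sv_carrier" "\<And>y. y \<in> sv_carrier \<Longrightarrow> D y = sv_br a y" using Der_inner[OF D(1)] by blast
    show "\<exists>a\<in>sv_carrier. \<Delta> x = sv_br a x"
    proof (rule bexI[OF _ a(1)])
      show "\<Delta> x = sv_br a x" using D(2) a(2)[OF x] by simp
    qed
  qed
  obtain a where a: "a \<in> sv_carrier" "\<And>x. x \<in> sv_carrier \<Longrightarrow> \<Delta> x = sv_br a x"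
    using local_inner[OF lin loc] by blast
  obtain D0 D1 where d: "sv_derivation False D0" "sv_derivation True D1"
    "\<And>x. x \<in> sv_carrier \<Longrightarrow> sv_br a x = (\<lambda>k. D0 x k + D1 x k)"
    using ad_Der[OF a(1)] unfolding sv_Der_def by blast
  show ?thesis unfolding sv_Der_def using d a(2) by metis
qed


end
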